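(* There is an absolute constant $C>0$ such that the following holds. Let $n,k$ be positive integers, let $p_1,\dots,p_n\in[0,1]$, and let $X_1,\dots,X_n$ be independent indicator random variables with $\mathbb{E}[X_i]=p_i$. Then there exist $q_1,\dots,q_n\in[0,1]$ such that: (1) $|q_i-p_i|\le C/k$ for all $i$; (2) each $q_i$ is an integer multiple of $1/k$; (3) if $Y_1,\dots,Y_n$ are independent indicator random variables with $\mathbb{E}[Y_i]=q_i$, then $\left\|\sum_i X_i-\sum_i Y_i\right\|\le C k^{-1/2}$ and, for every $j\in[n]$, $\left\|\sum_{i\ne j}X_i-\sum_{i\ne j}Y_i\right\|\le Ck^{-1/2}$.
   Context: For integer-valued random variables $A,B$ (identified with their distributions), $\|A-B\|$ denotes the total variation distance $\frac12\sum_{a}|\Pr[A=a]-\Pr[B=a]|$. *)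

theory Defs
  imports "HOL-Probability.Probability"
begin

definition indicator_sum_pmf :: "(nat \<Rightarrow> real) \<Rightarrow> nat set \<Rightarrow> nat pmf" where
  "indicator_sum_pmf p I =
     map_pmf (\<lambda>x. \<Sum>i\<in>I. of_bool (x i)) (Pi_pmf I False (\<lambda>i. bernoulli_pmf (p i)))"

definition tv_dist :: "nat pmf \<Rightarrow> nat pmf \<Rightarrow> real" where
  "tv_dist A B = (1/2) * (\<Sum>\<^sub>\<infinity>a. \<bar>pmf A a - pmf B a\<bar>)"

end

theory Submission
  imports Defs "HOL-Computational_Algebra.Polynomial"
begin

definition norm1 :: "real poly \<Rightarrow> real" where
  "norm1 P = (\<Sum>i\<le>degree P. \<bar>coeff P i\<bar>)"

lemma norm1_eq: "degree P < N \<Longrightarrow> norm1 P = (\<Sum>i<N. \<bar>coeff P i\<bar>)"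
  unfolding norm1_def
  by (intro sum.mono_neutral_left) (auto simp: coeff_eq_0)

lemma norm1_nonneg: "norm1 P \<ge> 0"
  unfolding norm1_def by (intro sum_nonneg) auto

lemma norm1_0[simp]: "norm1 0 = 0"
  by (simp add: norm1_def)

lemma norm1_pCons: "norm1 (pCons a P) = \<bar>a\<bar> + norm1 P"
proof -
  have d: "degree (pCons a P) < Suc (Suc (degree P))"
    using degree_pCons_le[of a P] by linarith
  have "norm1 (pCons a P) = (\<Sum>i<Suc (Suc (degree P)). \<bar>coeff (pCons a P) i\<bar>)"
    by (rule norm1_eq[OF d])
  also have "\<dots> = \<bar>a\<bar> + (\<Sum>i<Suc (degree P). \<bar>coeff P i\<bar>)"
    by (subst sum.lessThan_Suc_shift) simp
  also have "(\<Sum>i<Suc (degree P). \<bar>coeff P i\<bar>) = norm1 P"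
    by (rule norm1_eq[symmetric]) simp
  finally show ?thesis .
qed

lemma norm1_add: "norm1 (P + Q) \<le> norm1 P + norm1 Q"
proof -
  define N where "N = Suc (max (degree P) (degree Q))"
  have dP: "degree P < N" and dQ: "degree Q < N" and dPQ: "degree (P+Q) < N"
    using degree_add_le_max[of P Q] unfolding N_def by auto
  have "norm1 (P+Q) = (\<Sum>i<N. \<bar>coeff P i + coeff Q i\<bar>)"
    using norm1_eq[OF dPQ] by simp
  also have "\<dots> \<le> (\<Sum>i<N. \<bar>coeff P i\<bar> + \<bar>coeff Q i\<bar>)"
    by (intro sum_mono) (rule abs_triangle_ineq)
  also have "\<dots> = norm1 P + norm1 Q"
    using norm1_eq[OF dP] norm1_eq[OF dQ] by (simp add: sum.distrib)
  finally show ?thesis .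
qed

lemma norm1_smult: "norm1 (smult c P) = \<bar>c\<bar> * norm1 P"
proof -
  have d: "degree (smult c P) < Suc (degree P)" using degree_smult_le[of c P] by simp
  have "norm1 (smult c P) = (\<Sum>i<Suc (degree P). \<bar>c\<bar> * \<bar>coeff P i\<bar>)"
    using norm1_eq[OF d] by (simp add: abs_mult del: sum.lessThan_Suc)
  also have "\<dots> = \<bar>c\<bar> * norm1 P"
    using norm1_eq[of P "Suc (degree P)"] by (simp add: sum_distrib_left del: sum.lessThan_Suc)
  finally show ?thesis .
qed

lemma norm1_uminus: "norm1 (- P) = norm1 P"
  using norm1_smult[of "-1" P] by simp

lemma norm1_diff: "norm1 (P - Q) \<le> norm1 P + norm1 Q"
  using norm1_add[of P "-Q"] norm1_uminus[of Q] by simp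

lemma norm1_mult: "norm1 (P * Q) \<le> norm1 P * norm1 Q"
proof (induction P rule: pCons_induct)
  case 0
  then show ?case by simp
next
  case (pCons a P)
  have "norm1 (pCons a P * Q) = norm1 (smult a Q + pCons 0 (P * Q))"
    by simp
  also have "\<dots> \<le> \<bar>a\<bar> * norm1 Q + norm1 (P * Q)"
    using norm1_add[of "smult a Q" "pCons 0 (P * Q)"] by (simp add: norm1_smult norm1_pCons)
  also have "\<dots> \<le> \<bar>a\<bar> * norm1 Q + norm1 P * norm1 Q"
    using pCons.IH by simp
  also have "\<dots> = norm1 (pCons a P) * norm1 Q"
    by (simp add: norm1_pCons algebra_simps)
  finally show ?case .
qed

lemma norm1_sum: "norm1 (\<Sum>x\<in>A. f x) \<le> (\<Sum>x\<in>A. norm1 (f x))"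
proof (induction A rule: infinite_finite_induct)
  case (insert x F)
  then show ?case using norm1_add[of "f x" "sum f F"] by simp
qed auto

lemma norm1_prod: "norm1 (\<Prod>x\<in>A. f x) \<le> (\<Prod>x\<in>A. norm1 (f x))"
proof (induction A rule: infinite_finite_induct)
  case (infinite A)
  then show ?case by (simp add: norm1_def)
next
  case empty
  then show ?case by (simp add: norm1_def)
next
  case (insert x F)
  have "norm1 (prod f (insert x F)) = norm1 (f x * prod f F)" using insert by simp
  also have "\<dots> \<le> norm1 (f x) * norm1 (prod f F)" by (rule norm1_mult)
  also have "\<dots> \<le> norm1 (f x) * (\<Prod>x\<in>F. norm1 (f x))"
    by (intro mult_left_mono insert.IH norm1_nonneg)
  finally show ?case using insert by simp
qed

definition B :: "real \<Rightarrow> real poly" where "B x = [:1 - x, x:]"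
definition G :: "(nat \<Rightarrow> real) \<Rightarrow> nat set \<Rightarrow> real poly" where
  "G p I = (\<Prod>i\<in>I. B (p i))"
definition D :: "real poly" where "D = [:-1, 1:]"

lemma norm1_B: "0 \<le> x \<Longrightarrow> x \<le> 1 \<Longrightarrow> norm1 (B x) = 1"
  by (simp add: B_def norm1_pCons)

lemma norm1_D: "norm1 D = 2"
  by (simp add: D_def norm1_pCons)

lemma norm1_G: "(\<And>i. i \<in> I \<Longrightarrow> 0 \<le> p i \<and> p i \<le> 1) \<Longrightarrow> norm1 (G p I) \<le> 1"
proof -
  assume h: "\<And>i. i \<in> I \<Longrightarrow> 0 \<le> p i \<and> p i \<le> 1"
  have "norm1 (G p I) \<le> (\<Prod>i\<in>I. norm1 (B (p i)))" unfolding G_def by (rule norm1_prod)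
  also have "\<dots> = 1" using h by (intro prod.neutral) (auto simp: norm1_B)
  finally show ?thesis .
qed

lemma B_diff: "B a - B b = smult (a - b) D"
  by (simp add: B_def D_def)

lemma coeff_B_mult: "coeff (B x * P) n = (1 - x) * coeff P n + (if n = 0 then 0 else x * coeff P (n - 1))"
  by (cases n) (simp_all add: B_def algebra_simps)

lemma sum_upd_insert: "finite A \<Longrightarrow> x \<notin> A \<Longrightarrow>
  (\<Sum>i\<in>insert x A. of_bool (if i = x then y else f i)) = (of_bool y + (\<Sum>i\<in>A. of_bool (f i)) :: nat)"
proof -
  assume h: "finite A" "x \<notin> A"
  have "(\<Sum>i\<in>A. of_bool (if i = x then y else f i)) = (\<Sum>i\<in>A. of_bool (f i) :: nat)"
    using h by (intro sum.cong) auto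
  then show ?thesis using h by (simp del: sum_of_bool_eq)
qed

lemma pmf_indicator_sum:
  assumes "finite I" "\<And>i. i \<in> I \<Longrightarrow> 0 \<le> p i \<and> p i \<le> 1"
  shows "pmf (indicator_sum_pmf p I) n = coeff (G p I) n"
  using assms
proof (induction I arbitrary: n rule: finite_induct)
  case empty
  then show ?case by (simp add: indicator_sum_pmf_def G_def pmf_return)
next
  case (insert x A)
  have px: "0 \<le> p x" "p x \<le> 1" using insert.prems by auto
  have "indicator_sum_pmf p (insert x A) =
     map_pmf (\<lambda>(y,f). (\<Sum>i\<in>insert x A. of_bool ((f(x:=y)) i))) (pair_pmf (bernoulli_pmf (p x)) (Pi_pmf A False (\<lambda>i. bernoulli_pmf (p i))))"
    unfolding indicator_sum_pmf_def using insert.hyps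
    by (subst Pi_pmf_insert) (simp_all only: pmf.map_comp o_def case_prod_unfold not_False_eq_True)
  also have "\<dots> = map_pmf (\<lambda>(y,f). of_bool y + (\<Sum>i\<in>A. of_bool (f i))) (pair_pmf (bernoulli_pmf (p x)) (Pi_pmf A False (\<lambda>i. bernoulli_pmf (p i))))"
    using insert.hyps by (intro pmf.map_cong refl) (auto simp: case_prod_unfold sum_upd_insert simp del: sum_of_bool_eq intro!: sum.cong)
  also have "\<dots> = map_pmf (\<lambda>(y,s). of_bool y + s) (pair_pmf (bernoulli_pmf (p x)) (indicator_sum_pmf p A))"
    unfolding indicator_sum_pmf_def pair_map_pmf2
    by (simp add: map_pmf_comp case_prod_unfold apsnd_def map_prod_def)
  also have "\<dots> = bind_pmf (bernoulli_pmf (p x)) (\<lambda>y. map_pmf (\<lambda>s. of_bool y + s) (indicator_sum_pmf p A))"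
    by (simp add: pair_pmf_def map_bind_pmf bind_map_pmf bind_return_pmf map_pmf_def bind_assoc_pmf)
  finally have eq: "indicator_sum_pmf p (insert x A) = \<dots>" .
  have "pmf (indicator_sum_pmf p (insert x A)) n =
        pmf (map_pmf Suc (indicator_sum_pmf p A)) n * p x + pmf (indicator_sum_pmf p A) n * (1 - p x)"
  proof -
    have e1: "((+) (Suc 0)) = Suc" by auto
    have e0: "((+) (0::nat)) = id" by auto
    show ?thesis unfolding eq pmf_bind using px by (simp add: e1 e0 pmf.map_id)
  qed
  also have "pmf (map_pmf Suc (indicator_sum_pmf p A)) n = (if n = 0 then 0 else pmf (indicator_sum_pmf p A) (n - 1))"
  proof (cases n)
    case 0
    then show ?thesis by (auto intro!: pmf_map_outside)
  next
    case (Suc m)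
    then show ?thesis using pmf_map_inj'[of Suc] by simp
  qed
  also have "(if n = 0 then 0 else pmf (indicator_sum_pmf p A) (n - 1)) * p x + pmf (indicator_sum_pmf p A) n * (1 - p x)
       = coeff (B (p x) * G p A) n"
    using insert.IH insert.prems by (simp add: coeff_B_mult algebra_simps)
  also have "B (p x) * G p A = G p (insert x A)"
    using insert.hyps by (simp add: G_def)
  finally show ?case .
qed

lemma tv_dist_norm1:
  assumes "finite I" "\<And>i. i \<in> I \<Longrightarrow> 0 \<le> p i \<and> p i \<le> 1" "\<And>i. i \<in> I \<Longrightarrow> 0 \<le> q i \<and> q i \<le> 1"
  shows "tv_dist (indicator_sum_pmf p I) (indicator_sum_pmf q I) = norm1 (G p I - G q I) / 2"
proof -
  define N where "N = Suc (degree (G p I - G q I))"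
  have "(\<Sum>\<^sub>\<infinity>a. \<bar>pmf (indicator_sum_pmf p I) a - pmf (indicator_sum_pmf q I) a\<bar>)
      = (\<Sum>\<^sub>\<infinity>a. \<bar>coeff (G p I - G q I) a\<bar>)"
    using pmf_indicator_sum[OF assms(1,2)] pmf_indicator_sum[OF assms(1,3)] by simp
  also have "\<dots> = (\<Sum>\<^sub>\<infinity>a\<in>{..<N}. \<bar>coeff (G p I - G q I) a\<bar>)"
    by (intro infsum_cong_neutral) (auto simp: N_def coeff_eq_0 simp del: coeff_diff)
  also have "\<dots> = norm1 (G p I - G q I)"
    using norm1_eq[of "G p I - G q I" N] by (simp add: N_def del: coeff_diff sum.lessThan_Suc)
  finally show ?thesis unfolding tv_dist_def by simp
qed

definition h :: "real poly" where "h = [:1/2, 1/2:]"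

lemma coeff_h_pow: "coeff (h ^ j) i = real (j choose i) / 2 ^ j"
proof (cases "i \<le> j")
  case True
  have "coeff (h ^ j) i = real (j choose i) * (1/2) ^ i * (1/2) ^ (j - i)"
    unfolding h_def using coeff_linear_poly_power[OF True, of "1/2::real" "1/2"] by simp
  also have "\<dots> = real (j choose i) / 2 ^ j"
    using True by (simp add: power_add[symmetric] power_divide)
  finally show ?thesis .
next
  case False
  have "degree (h ^ j) \<le> j" unfolding h_def
    using degree_power_le[of "[:1/2, 1/2:]::real poly" j] by simp
  then have "coeff (h ^ j) i = 0" using False by (intro coeff_eq_0) simp
  then show ?thesis using False by simp
qed

lemma norm1_h_pow: "norm1 (h ^ j) \<le> 1"
proof -
  have "norm1 (h ^ j) \<le> norm1 h ^ j"
  proof (induction j)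
    case 0 then show ?case by (simp add: norm1_def)
  next
    case (Suc j)
    have "norm1 (h ^ Suc j) \<le> norm1 h * norm1 (h ^ j)" using norm1_mult[of h "h^j"] by simp
    also have "\<dots> \<le> norm1 h * norm1 h ^ j"
      by (intro mult_left_mono Suc.IH norm1_nonneg)
    finally show ?case by simp
  qed
  also have "norm1 h = 1" by (simp add: h_def norm1_pCons)
  finally show ?thesis by simp
qed

lemma coeff_D_mult: "coeff (D * P) i = (if i = 0 then 0 else coeff P (i - 1)) - coeff P i"
  by (cases i) (simp_all add: D_def)

lemma telescope_up:
  fixes g :: "nat \<Rightarrow> real"
  assumes "\<And>i. i < n \<Longrightarrow> g i \<le> g (Suc i)"
  shows "(\<Sum>i<n. \<bar>g i - g (Suc i)\<bar>) = g n - g 0"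
proof -
  have "(\<Sum>i<n. \<bar>g i - g (Suc i)\<bar>) = (\<Sum>i<n. g (Suc i) - g i)"
    using assms by (intro sum.cong) auto
  also have "\<dots> = g n - g 0" by (rule sum_lessThan_telescope)
  finally show ?thesis .
qed

lemma telescope_down:
  fixes g :: "nat \<Rightarrow> real"
  assumes "m \<le> n" "\<And>i. m \<le> i \<Longrightarrow> i < n \<Longrightarrow> g (Suc i) \<le> g i"
  shows "(\<Sum>i\<in>{m..<n}. \<bar>g i - g (Suc i)\<bar>) = g m - g n"
proof -
  have "(\<Sum>i\<in>{m..<n}. \<bar>g i - g (Suc i)\<bar>) = - (\<Sum>i\<in>{m..<n}. g (Suc i) - g i)"
    using assms by (simp add: sum_negf[symmetric])
  also have "\<dots> = g m - g n" using sum_Suc_diff'[OF assms(1), of g] by simp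
  finally show ?thesis .
qed

definition beta1 :: "nat \<Rightarrow> real" where "beta1 j = norm1 (D * h ^ j)"

lemma beta1_eq: "beta1 j = 2 * (real (j choose (j div 2)) / 2 ^ j)"
proof -
  define b where "b i = real (j choose i) / 2 ^ j" for i
  define g where "g i = (if i = 0 then 0 else b (i - 1))" for i
  define m where "m = j div 2"
  have deg: "degree (D * h ^ j) < j + 2"
  proof -
    have "degree (D * h ^ j) \<le> degree D + degree (h ^ j)" by (rule degree_mult_le)
    also have "degree (h ^ j) \<le> j" unfolding h_def
      using degree_power_le[of "[:1/2, 1/2:]::real poly" j] by simp
    finally show ?thesis by (simp add: D_def)
  qed
  have c: "coeff (D * h ^ j) i = g i - g (Suc i)" for i
    by (simp add: coeff_D_mult coeff_h_pow g_def b_def)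
  have "beta1 j = (\<Sum>i<j+2. \<bar>g i - g (Suc i)\<bar>)"
    unfolding beta1_def norm1_eq[OF deg] c ..
  also have "{..<j+2} = {..<m+1} \<union> {m+1..<j+2}" unfolding m_def by auto
  also have "(\<Sum>i\<in>{..<m+1} \<union> {m+1..<j+2}. \<bar>g i - g (Suc i)\<bar>) =
      (\<Sum>i<m+1. \<bar>g i - g (Suc i)\<bar>) + (\<Sum>i\<in>{m+1..<j+2}. \<bar>g i - g (Suc i)\<bar>)"
    by (intro sum.union_disjoint) auto
  also have "(\<Sum>i<m+1. \<bar>g i - g (Suc i)\<bar>) = g (m+1) - g 0"
  proof (rule telescope_up)
    fix i assume i: "i < m + 1"
    show "g i \<le> g (Suc i)"
    proof (cases i)
      case 0 then show ?thesis by (simp add: g_def b_def)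
    next
      case (Suc i')
      have "j choose i' \<le> j choose Suc i'"
        using i Suc unfolding m_def by (intro binomial_mono) auto
      then show ?thesis using Suc by (simp add: g_def b_def divide_right_mono)
    qed
  qed
  also have "(\<Sum>i\<in>{m+1..<j+2}. \<bar>g i - g (Suc i)\<bar>) = g (m+1) - g (j+2)"
  proof (rule telescope_down)
    show "m + 1 \<le> j + 2" unfolding m_def by simp
    fix i assume i: "m + 1 \<le> i" "i < j + 2"
    show "g (Suc i) \<le> g i"
    proof (cases "i = j + 1")
      case True then show ?thesis by (simp add: g_def b_def binomial_eq_0)
    next
      case False
      then have "j choose i \<le> j choose (i - 1)"
        using i unfolding m_def by (intro binomial_antimono) auto
      then show ?thesis using i by (simp add: g_def b_def divide_right_mono)
    qed
  qed
  finally show ?thesis by (simp add: g_def b_def m_def)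
qed

lemma aux_cs1: "(q::real) > 0 \<Longrightarrow> (y::real) > 0 \<Longrightarrow> c * (2*y-1) * (2*y) / y^2 / (4*q) = c/q * ((2*y-1)/(2*y))"
  by (simp add: field_simps power2_eq_square)
lemma aux_cs2: "(q::real) > 0 \<Longrightarrow> (y::real) > 0 \<Longrightarrow> c * (2*y-1) / y / (2*q) = c/q * ((2*y-1)/(2*y))"
  by (simp add: field_simps power2_eq_square)

lemma aux_e: "(y::real) > 0 \<Longrightarrow> 1/y * (y/(y+1))^2 = y/((y+1)*(y+1))"
proof -
  assume y: "y > 0"
  then have "y \<noteq> 0" "y + 1 \<noteq> 0" by auto
  then show ?thesis by (simp add: power2_eq_square field_simps)
qed
lemma aux_i1: "(x::real) \<ge> 0 \<Longrightarrow> 1/(2*x+1) * ((2*x+1)/(2*x+2))^2 \<le> 1/(2*x+3)"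
proof -
  assume x: "x \<ge> 0"
  have e: "1/(2*x+1) * ((2*x+1)/(2*x+2))^2 = (2*x+1)/((2*x+2)*(2*x+2))"
    using aux_e[of "2*x+1"] x by (simp add: add.assoc)
  have "(2*x+1)*(2*x+3) \<le> (2*x+2)*(2*x+2)" by (simp add: algebra_simps)
  then show ?thesis unfolding e using x by (simp add: divide_simps)
qed
lemma aux_i2: "(x::real) \<ge> 0 \<Longrightarrow> 1/(2*x+1) * ((2*x+1)/(2*x+2))^2 \<le> 1/(2*x+2)"
proof -
  assume x: "x \<ge> 0"
  have e: "1/(2*x+1) * ((2*x+1)/(2*x+2))^2 = (2*x+1)/((2*x+2)*(2*x+2))"
    using aux_e[of "2*x+1"] x by (simp add: add.assoc)
  have "(2*x+1)*(2*x+2) \<le> (2*x+2)*(2*x+2)" using x by (intro mult_right_mono) auto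
  then show ?thesis unfolding e using x by (simp add: divide_simps)
qed
lemma aux_i3: "(v::real) > 0 \<Longrightarrow> u \<ge> v * v / 4 \<Longrightarrow> 16 / u \<le> (8 / v)^2"
proof -
  assume v: "v > 0" and u: "u \<ge> v * v / 4"
  have "u > 0" using v u by (smt (verit) mult_pos_pos divide_pos_pos)
  then show ?thesis using u v by (simp add: field_simps power2_eq_square)
qed

lemma central_sq: "(real ((2*m) choose m) / 4 ^ m)^2 \<le> 1 / (2 * real m + 1)"
proof (induction m)
  case 0 then show ?case by simp
next
  case (Suc m)
  define a where "a = real ((2*m) choose m) / 4 ^ m"
  have rec: "real ((2*Suc m) choose Suc m) = real ((2*m) choose m) * (2*m+1) * (2*m+2) / (m+1)^2"
  proof -
    have b0: "real ((2*Suc m) choose Suc m) = fact (2*Suc m) / (fact (Suc m) * fact (2*Suc m - Suc m))"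
      by (rule binomial_fact) simp
    have e1: "2*Suc m - Suc m = Suc m" by simp
    have e2: "2*Suc m = Suc (Suc (2*m))" by simp
    have f1: "fact (2*Suc m) = (2*m+2)*((2*m+1)*(fact (2*m)::real))"
      unfolding e2 fact_Suc by (simp add: algebra_simps)
    have f2: "fact (Suc m) = (m+1) * (fact m :: real)" by (simp add: algebra_simps)
    have b1: "real ((2*m) choose m) = fact (2*m) / (fact m * fact (2*m - m))"
      by (rule binomial_fact) simp
    have e3: "2*m - m = m" by simp
    have "fact m \<noteq> (0::real)" by simp
    then show ?thesis unfolding b0 e1 f1 f2 b1 e3 by (simp add: field_simps power2_eq_square)
  qed
  have "real ((2*Suc m) choose Suc m) / 4 ^ Suc m =
     real ((2*m) choose m) * (2*(real m+1)-1) * (2*(real m+1)) / (real m+1)^2 / (4*4^m)"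
    unfolding rec by (simp add: algebra_simps)
  also have "\<dots> = a * ((2*(real m+1)-1) / (2*(real m+1)))"
    unfolding a_def by (rule aux_cs1) auto
  finally have "real ((2*Suc m) choose Suc m) / 4 ^ Suc m = a * ((2*m+1) / (2*m+2))"
    by (simp add: algebra_simps)
  then have "(real ((2*Suc m) choose Suc m) / 4 ^ Suc m)^2 = a^2 * ((2*m+1) / (2*m+2))^2"
    by (simp only: power_mult_distrib)
  also have "\<dots> \<le> 1 / (2 * real m + 1) * ((2*m+1) / (2*m+2))^2"
    using Suc.IH unfolding a_def by (intro mult_right_mono) auto
  also have "\<dots> \<le> 1 / (2 * real (Suc m) + 1)"
    using aux_i1[of "real m"] by (simp add: algebra_simps)
  finally show ?case .
qed

lemma central_bound: "(real (j choose (j div 2)) / 2 ^ j)^2 \<le> 1 / (real j + 1)"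
proof (cases "even j")
  case True
  then obtain m where j: "j = 2*m" by blast
  have "(2::real) ^ j = 4 ^ m" unfolding j by (simp add: power_mult)
  then show ?thesis using central_sq[of m] j by simp
next
  case False
  then obtain m where j: "j = 2*m+1" using oddE by blast
  have jd: "j div 2 = m" unfolding j by simp
  have rec: "real (j choose m) = real ((2*m) choose m) * (2*m+1) / (m+1)"
  proof -
    have b0: "real (j choose m) = fact j / (fact m * fact (j - m))"
      by (rule binomial_fact) (simp add: j)
    have e1: "j - m = Suc m" by (simp add: j)
    have f1: "fact j = (2*m+1)*(fact (2*m)::real)"
      unfolding j by (simp add: algebra_simps)
    have f2: "fact (Suc m) = (m+1) * (fact m :: real)" by (simp add: algebra_simps)
    have b1: "real ((2*m) choose m) = fact (2*m) / (fact m * fact (2*m - m))"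
      by (rule binomial_fact) simp
    have e3: "2*m - m = m" by simp
    have "fact m \<noteq> (0::real)" by simp
    then show ?thesis unfolding b0 e1 f1 f2 b1 e3 by (simp add: field_simps)
  qed
  define a where "a = real ((2*m) choose m) / 4 ^ m"
  have "real (j choose (j div 2)) / 2 ^ j = real ((2*m) choose m) * (2*m+1) / (m+1) / 2 ^ j"
    unfolding jd rec ..
  also have "\<dots> = real ((2*m) choose m) * (2*(real m+1)-1) / (real m+1) / (2*4^m)"
  proof -
    have p2: "(2::real)^j = 2*4^m" unfolding j by (simp add: power_add power_mult)
    show ?thesis unfolding p2 by (simp add: algebra_simps)
  qed
  also have "\<dots> = a * ((2*(real m+1)-1) / (2*(real m+1)))"
    unfolding a_def by (rule aux_cs2) auto
  also have "\<dots> = a * ((2*m+1) / (2*m+2))" by (simp add: algebra_simps)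
  finally have "real (j choose (j div 2)) / 2 ^ j = a * ((2*m+1) / (2*m+2))" .
  then have "(real (j choose (j div 2)) / 2 ^ j)^2 = a^2 * ((2*m+1) / (2*m+2))^2"
    by (simp only: power_mult_distrib)
  also have "\<dots> \<le> 1 / (2 * real m + 1) * ((2*m+1) / (2*m+2))^2"
    using central_sq[of m] unfolding a_def by (intro mult_right_mono) auto
  also have "\<dots> \<le> 1 / (real j + 1)"
    using aux_i2[of "real m"] unfolding j by (simp add: algebra_simps)
  finally show ?thesis .
qed

lemma beta1_sq: "(beta1 j)^2 \<le> 4 / (real j + 1)"
proof -
  have "(beta1 j)^2 = 4 * (real (j choose (j div 2)) / 2 ^ j)^2"
    unfolding beta1_eq power_mult_distrib by simp
  also have "\<dots> \<le> 4 * (1 / (real j + 1))"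
    by (intro mult_left_mono central_bound) auto
  finally show ?thesis by simp
qed

definition beta2 :: "nat \<Rightarrow> real" where "beta2 j = norm1 (D^2 * h ^ j)"

lemma beta2_le: "beta2 j \<le> 8 / (real j + 1)"
proof -
  define a where "a = j div 2"
  define b where "b = j - a"
  have jab: "j = a + b" unfolding a_def b_def by simp
  have "D^2 * h ^ j = (D * h ^ a) * (D * h ^ b)"
    unfolding jab by (simp add: power_add power2_eq_square algebra_simps)
  then have "beta2 j \<le> beta1 a * beta1 b"
    unfolding beta2_def beta1_def using norm1_mult by metis
  also have "\<dots> \<le> 8 / (real j + 1)"
  proof (rule power2_le_imp_le)
    have "(beta1 a * beta1 b)^2 = (beta1 a)^2 * (beta1 b)^2" by (simp add: power_mult_distrib)
    also have "\<dots> \<le> (4 / (real a + 1)) * (4 / (real b + 1))"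
      by (intro mult_mono beta1_sq) auto
    also have "\<dots> \<le> (8 / (real j + 1))^2"
    proof -
      have n1: "j \<le> 2*(j div 2) + 1" by presburger
      have n2: "2*(j div 2) \<le> j" by presburger
      have r1: "real j \<le> 2 * real a + 1" using of_nat_le_iff[of j "2*(j div 2)+1", where 'a=real] n1
        unfolding a_def by simp
      have r2: "2 * real a \<le> real j" using of_nat_le_iff[of "2*(j div 2)" j, where 'a=real] n2
        unfolding a_def by simp
      have r3: "real b = real j - real a" unfolding b_def a_def using n2 by (simp add: of_nat_diff)
      have "real a + 1 \<ge> (real j + 1) / 2" using r1 r2 r3 by (simp add: field_simps)
      moreover have "real b + 1 \<ge> (real j + 1) / 2" using r1 r2 r3 by (simp add: field_simps)
      ultimately have "(real a + 1) * (real b + 1) \<ge> ((real j + 1) / 2) * ((real j + 1) / 2)"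
        by (intro mult_mono) auto
      then show ?thesis using aux_i3[of "real j + 1" "(real a + 1) * (real b + 1)"] by (simp add: algebra_simps)
    qed
    finally show "(beta1 a * beta1 b)^2 \<le> (8 / (real j + 1))^2" .
  qed auto
  finally show ?thesis .
qed

lemma beta2_le4: "beta2 j \<le> 4"
proof -
  have "beta2 j \<le> norm1 (D^2) * norm1 (h ^ j)" unfolding beta2_def by (rule norm1_mult)
  also have "norm1 (D^2) \<le> 4"
    using norm1_mult[of D D] norm1_D by (simp add: power2_eq_square)
  finally show ?thesis using norm1_h_pow[of j] norm1_nonneg[of "h^j"]
    by (smt (verit) mult_left_mono mult_right_mono norm1_nonneg)
qed

lemma beta2_nonneg: "beta2 j \<ge> 0" unfolding beta2_def by (rule norm1_nonneg)

definition mn :: "real \<Rightarrow> real" where "mn x = min x (1 - x)"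

lemma prod_smult_h: "finite A \<Longrightarrow> (\<Prod>l\<in>A. smult (r l) h) = smult (\<Prod>l\<in>A. r l) (h ^ card A)"
  by (induction A rule: finite_induct) (auto simp: mult_smult_left mult_smult_right mult.commute)

lemma beta2_split:
  assumes "nu \<ge> 0"
  shows "beta2 j \<le> 4 * exp (nu/4) * (1/2)^j + 32 / (nu + 4)"
proof (cases "real j \<le> nu / 4")
  case True
  have e1: "exp (-1::real) \<le> 1/2"
  proof -
    have "2 \<le> exp (1::real)" using exp_ge_add_one_self[of "1::real"] by simp
    then show ?thesis by (simp add: exp_minus field_simps)
  qed
  have "exp (- real j) = exp (-1::real) ^ j" using exp_of_nat_mult[of j "-1::real"] by simp
  also have "\<dots> \<le> (1/2)^j" by (intro power_mono e1) auto
  finally have a: "exp (- real j) \<le> (1/2::real)^j" .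
  have "exp (- (nu/4)) \<le> exp (- real j)" using True by simp
  then have "exp (- (nu/4)) \<le> (1/2::real)^j" using a by linarith
  then have "1 \<le> exp (nu/4) * (1/2::real)^j"
    by (simp add: exp_minus field_simps)
  then have "4 \<le> 4 * exp (nu/4) * (1/2::real)^j" by simp
  moreover have "32 / (nu + 4) \<ge> 0" using assms by simp
  ultimately show ?thesis using beta2_le4[of j] by linarith
next
  case False
  have "beta2 j \<le> 8 / (real j + 1)" by (rule beta2_le)
  also have "\<dots> \<le> 8 / (nu/4 + 1)"
    using False assms by (intro divide_left_mono) auto
  also have "\<dots> = 32 / (nu + 4)" by (simp add: field_simps)
  finally have "beta2 j \<le> 32 / (nu + 4)" .
  moreover have "4 * exp (nu/4) * (1/2::real)^j \<ge> 0" by simp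
  ultimately show ?thesis by linarith
qed

lemma smoothing:
  assumes J: "finite J" and x: "\<And>l. l \<in> J \<Longrightarrow> 0 \<le> x l \<and> x l \<le> 1"
  shows "norm1 (D^2 * G x J) \<le> 48 / (2 * (\<Sum>l\<in>J. mn (x l)) + 4)"
proof -
  define r where "r l = 2 * mn (x l)" for l
  define E where "E l = B (x l) - smult (r l) h" for l
  define nu where "nu = (\<Sum>l\<in>J. r l)"
  have r01: "0 \<le> r l \<and> r l \<le> 1" if "l \<in> J" for l
    using x[OF that] unfolding r_def mn_def by (auto simp: min_def)
  have nu_eq: "nu = 2 * (\<Sum>l\<in>J. mn (x l))" unfolding nu_def r_def by (simp add: sum_distrib_left)
  have nu0: "nu \<ge> 0" unfolding nu_def using r01 by (intro sum_nonneg) auto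
  have normE: "norm1 (E l) = 1 - r l" if "l \<in> J" for l
  proof -
    have "E l = [:1 - x l - r l / 2, x l - r l / 2:]"
      unfolding E_def B_def h_def by simp
    moreover have "1 - x l - r l / 2 \<ge> 0" "x l - r l / 2 \<ge> 0"
      using x[OF that] unfolding r_def mn_def by auto
    ultimately show ?thesis by (simp add: norm1_pCons)
  qed
  define w where "w A = (\<Prod>l\<in>A. r l) * (\<Prod>l\<in>J - A. 1 - r l)" for A
  have w0: "w A \<ge> 0" if "A \<in> Pow J" for A
    unfolding w_def using that r01 by (intro mult_nonneg_nonneg prod_nonneg) auto
  have "G x J = (\<Prod>l\<in>J. smult (r l) h + E l)"
    unfolding G_def E_def by simp
  also have "\<dots> = (\<Sum>A\<in>Pow J. (\<Prod>l\<in>A. smult (r l) h) * (\<Prod>l\<in>J - A. E l))"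
    by (rule prod_add[OF J])
  also have "\<dots> = (\<Sum>A\<in>Pow J. smult (\<Prod>l\<in>A. r l) (h ^ card A) * (\<Prod>l\<in>J - A. E l))"
    using J by (intro sum.cong refl) (simp add: prod_smult_h finite_subset)
  finally have GE: "G x J = \<dots>" .
  have "norm1 (D^2 * G x J) = norm1 (\<Sum>A\<in>Pow J. smult (\<Prod>l\<in>A. r l) (D^2 * h ^ card A) * (\<Prod>l\<in>J - A. E l))"
    unfolding GE by (simp add: sum_distrib_left mult_smult_right mult.assoc)
  also have "\<dots> \<le> (\<Sum>A\<in>Pow J. norm1 (smult (\<Prod>l\<in>A. r l) (D^2 * h ^ card A) * (\<Prod>l\<in>J - A. E l)))"
    by (rule norm1_sum)
  also have "\<dots> \<le> (\<Sum>A\<in>Pow J. w A * beta2 (card A))"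
  proof (intro sum_mono)
    fix A assume A: "A \<in> Pow J"
    have n1: "norm1 (smult (\<Prod>l\<in>A. r l) (D^2 * h ^ card A)) = (\<Prod>l\<in>A. r l) * beta2 (card A)"
      unfolding norm1_smult beta2_def using A r01
      by (subst abs_of_nonneg) (auto intro!: prod_nonneg)
    have "norm1 (\<Prod>l\<in>J - A. E l) \<le> (\<Prod>l\<in>J - A. norm1 (E l))" by (rule norm1_prod)
    also have "(\<Prod>l\<in>J - A. norm1 (E l)) = (\<Prod>l\<in>J - A. 1 - r l)"
      using normE by (intro prod.cong) auto
    finally have n2: "norm1 (\<Prod>l\<in>J - A. E l) \<le> (\<Prod>l\<in>J - A. 1 - r l)" .
    have nn: "(\<Prod>l\<in>A. r l) * beta2 (card A) \<ge> 0"
      using A r01 beta2_nonneg by (auto intro!: mult_nonneg_nonneg prod_nonneg)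
    have "norm1 (smult (\<Prod>l\<in>A. r l) (D^2 * h ^ card A) * (\<Prod>l\<in>J - A. E l))
        \<le> norm1 (smult (\<Prod>l\<in>A. r l) (D^2 * h ^ card A)) * norm1 (\<Prod>l\<in>J - A. E l)"
      by (rule norm1_mult)
    also have "\<dots> \<le> ((\<Prod>l\<in>A. r l) * beta2 (card A)) * (\<Prod>l\<in>J - A. 1 - r l)"
      unfolding n1 using n2 nn by (rule mult_left_mono)
    finally show "norm1 (smult (\<Prod>l\<in>A. r l) (D^2 * h ^ card A) * (\<Prod>l\<in>J - A. E l)) \<le> w A * beta2 (card A)"
      unfolding w_def by (simp add: mult_ac)
  qed
  also have "\<dots> \<le> (\<Sum>A\<in>Pow J. w A * (4 * exp (nu/4) * (1/2)^card A + 32 / (nu + 4)))"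
    by (intro sum_mono mult_left_mono beta2_split nu0 w0)
  also have "\<dots> = 4 * exp (nu/4) * (\<Sum>A\<in>Pow J. w A * (1/2)^card A) + 32 / (nu + 4) * (\<Sum>A\<in>Pow J. w A)"
    by (simp add: sum_distrib_left sum_distrib_right sum.distrib algebra_simps sum_divide_distrib)
  also have "(\<Sum>A\<in>Pow J. w A) = 1"
  proof -
    have "(\<Prod>l\<in>J. r l + (1 - r l)) = (\<Sum>A\<in>Pow J. w A)"
      unfolding w_def by (rule prod_add[OF J])
    then show ?thesis by simp
  qed
  also have "(\<Sum>A\<in>Pow J. w A * (1/2)^card A) = (\<Prod>l\<in>J. 1 - r l / 2)"
  proof -
    have "(\<Prod>l\<in>J. r l / 2 + (1 - r l)) = (\<Sum>A\<in>Pow J. (\<Prod>l\<in>A. r l / 2) * (\<Prod>l\<in>J - A. 1 - r l))"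
      by (rule prod_add[OF J])
    also have "\<dots> = (\<Sum>A\<in>Pow J. w A * (1/2)^card A)"
      unfolding w_def by (intro sum.cong refl) (simp add: prod_dividef power_one_over)
    finally show ?thesis by (simp add: algebra_simps)
  qed
  also have "(\<Prod>l\<in>J. 1 - r l / 2) \<le> exp (- nu / 2)"
  proof -
    have "(\<Prod>l\<in>J. 1 - r l / 2) \<le> (\<Prod>l\<in>J. exp (- (r l / 2)))"
    proof (intro prod_mono conjI)
      fix l assume l: "l \<in> J"
      show "0 \<le> 1 - r l / 2" using r01[OF l] by simp
      show "1 - r l / 2 \<le> exp (- (r l / 2))" using exp_ge_add_one_self[of "- (r l / 2)"] by simp
    qed
    also have "\<dots> = exp (- nu / 2)"
      unfolding nu_def using exp_sum[OF J, of "\<lambda>l. - (r l / 2)"] by (simp add: sum_negf sum_divide_distrib)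
    finally show ?thesis .
  qed
  finally have main: "norm1 (D^2 * G x J) \<le> 4 * exp (nu/4) * exp (- nu / 2) + 32 / (nu + 4)"
    by simp
  have "exp (nu/4) * exp (- nu / 2) = exp (- (nu / 4))" by (simp add: exp_add[symmetric])
  also have "\<dots> \<le> 4 / (nu + 4)"
  proof -
    have "nu + 4 \<le> exp (nu / 4) * 4" using exp_ge_add_one_self[of "nu/4"] by linarith
    then show ?thesis using nu0 by (simp add: exp_minus field_simps)
  qed
  finally have "4 * exp (nu/4) * exp (- nu / 2) \<le> 16 / (nu + 4)" by simp
  with main have "norm1 (D^2 * G x J) \<le> 48 / (nu + 4)" by simp
  then show ?thesis using nu_eq by simp
qed

definition Pr :: "(nat \<Rightarrow> real) \<Rightarrow> nat set \<Rightarrow> real poly" where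
  "Pr f S = (\<Prod>t\<in>S. B (f t))"

lemma abel_poly:
  fixes E :: "nat \<Rightarrow> real" and g :: "nat \<Rightarrow> real poly"
  assumes "E 0 = 0"
  shows "(\<Sum>m<Suc M. smult (E (Suc m) - E m) (g m)) =
         smult (E (Suc M)) (g M) - (\<Sum>m<M. smult (E (Suc m)) (g (Suc m) - g m))"
proof (induction M)
  case 0 then show ?case using assms by simp
next
  case (Suc M)
  have "(\<Sum>m<Suc (Suc M). smult (E (Suc m) - E m) (g m)) =
        (\<Sum>m<Suc M. smult (E (Suc m) - E m) (g m)) + smult (E (Suc (Suc M)) - E (Suc M)) (g (Suc M))"
    by simp
  also have "\<dots> = smult (E (Suc M)) (g M) - (\<Sum>m<M. smult (E (Suc m)) (g (Suc m) - g m))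
      + smult (E (Suc (Suc M)) - E (Suc M)) (g (Suc M))" using Suc.IH by simp
  also have "\<dots> = smult (E (Suc (Suc M))) (g (Suc M)) - (\<Sum>m<Suc M. smult (E (Suc m)) (g (Suc m) - g m))"
    by (simp add: smult_diff_right smult_diff_left algebra_simps)
  finally show ?case .
qed

lemma telescope_identity:
  fixes a b :: "nat \<Rightarrow> real" and M :: nat
  defines "E \<equiv> (\<lambda>m. \<Sum>t<m. a t - b t)"
  defines "Gm \<equiv> (\<lambda>m. Pr b {..<m} * Pr a {Suc m..<Suc M})"
  defines "R \<equiv> (\<lambda>m. Pr b {..<m} * Pr a {Suc (Suc m)..<Suc M})"
  shows "Pr a {..<Suc M} - Pr b {..<Suc M} =
     smult (E (Suc M)) (D * Gm M) - (\<Sum>m<M. smult (E (Suc m) * (b m - a (Suc m))) (D^2 * R m))"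
proof -
  define N where "N = Suc M"
  define H where "H m = Pr b {..<m} * Pr a {m..<N}" for m
  have "Pr a {..<N} - Pr b {..<N} = H 0 - H N"
    unfolding H_def Pr_def by (simp add: atLeast0LessThan)
  also have "\<dots> = (\<Sum>m<N. H m - H (Suc m))"
    by (rule sum_lessThan_telescope'[symmetric])
  also have "\<dots> = (\<Sum>m<N. smult (E (Suc m) - E m) (D * Gm m))"
  proof (intro sum.cong refl)
    fix m assume m: "m \<in> {..<N}"
    have "H m = Pr b {..<m} * (B (a m) * Pr a {Suc m..<N})"
      unfolding H_def Pr_def using m by (simp add: prod.atLeast_Suc_lessThan)
    moreover have "H (Suc m) = Pr b {..<m} * (B (b m) * Pr a {Suc m..<N})"
      unfolding H_def Pr_def by (simp add: mult_ac)
    ultimately have "H m - H (Suc m) = Pr b {..<m} * ((B (a m) - B (b m)) * Pr a {Suc m..<N})"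
      by (simp add: algebra_simps)
    also have "\<dots> = smult (a m - b m) (D * Gm m)"
      unfolding B_diff Gm_def N_def by (simp add: mult_ac)
    also have "a m - b m = E (Suc m) - E m" unfolding E_def by simp
    finally show "H m - H (Suc m) = smult (E (Suc m) - E m) (D * Gm m)" .
  qed
  also have "\<dots> = smult (E (Suc M)) (D * Gm M) - (\<Sum>m<M. smult (E (Suc m)) (D * Gm (Suc m) - D * Gm m))"
    unfolding N_def by (rule abel_poly) (simp add: E_def)
  also have "(\<Sum>m<M. smult (E (Suc m)) (D * Gm (Suc m) - D * Gm m)) =
             (\<Sum>m<M. smult (E (Suc m) * (b m - a (Suc m))) (D^2 * R m))"
  proof (intro sum.cong refl)
    fix m assume m: "m \<in> {..<M}"
    have "Gm (Suc m) = Pr b {..<m} * B (b m) * Pr a {Suc (Suc m)..<Suc M}"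
      unfolding Gm_def Pr_def by simp
    moreover have "Gm m = Pr b {..<m} * B (a (Suc m)) * Pr a {Suc (Suc m)..<Suc M}"
    proof -
      have "Pr a {Suc m..<Suc M} = B (a (Suc m)) * Pr a {Suc (Suc m)..<Suc M}"
        unfolding Pr_def using m by (subst prod.atLeast_Suc_lessThan) auto
      then show ?thesis unfolding Gm_def by (simp add: mult_ac)
    qed
    ultimately have "D * Gm (Suc m) - D * Gm m = D * (Pr b {..<m} * (B (b m) - B (a (Suc m))) * Pr a {Suc (Suc m)..<Suc M})"
      by (simp add: algebra_simps)
    also have "\<dots> = smult (b m - a (Suc m)) (D^2 * R m)"
      unfolding B_diff R_def by (simp add: mult_ac power2_eq_square)
    finally show "smult (E (Suc m)) (D * Gm (Suc m) - D * Gm m) = smult (E (Suc m) * (b m - a (Suc m))) (D^2 * R m)"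
      by simp
  qed
  finally show ?thesis unfolding N_def .
qed

lemma telescope_bound:
  fixes a b :: "nat \<Rightarrow> real" and M :: nat
  assumes "\<And>t. 0 \<le> a t \<and> a t \<le> 1" "\<And>t. 0 \<le> b t \<and> b t \<le> 1"
  defines "E \<equiv> (\<lambda>m. \<Sum>t<m. a t - b t)"
  defines "R \<equiv> (\<lambda>m. Pr b {..<m} * Pr a {Suc (Suc m)..<Suc M})"
  shows "norm1 (Pr a {..<Suc M} - Pr b {..<Suc M}) \<le>
     2 * \<bar>E (Suc M)\<bar> + (\<Sum>m<M. \<bar>E (Suc m)\<bar> * \<bar>b m - a (Suc m)\<bar> * norm1 (D^2 * R m))"
proof -
  define Gm where "Gm = (\<lambda>m. Pr b {..<m} * Pr a {Suc m..<Suc M})"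
  have nPr: "norm1 (Pr f S) \<le> 1" if "\<And>t. 0 \<le> f t \<and> f t \<le> 1" for f S
  proof -
    have "norm1 (Pr f S) \<le> (\<Prod>t\<in>S. norm1 (B (f t)))" unfolding Pr_def by (rule norm1_prod)
    also have "\<dots> = 1" using that by (intro prod.neutral) (auto simp: norm1_B)
    finally show ?thesis .
  qed
  have nG: "norm1 (D * Gm M) \<le> 2"
  proof -
    have "norm1 (D * Gm M) \<le> norm1 D * norm1 (Gm M)" by (rule norm1_mult)
    also have "norm1 (Gm M) \<le> norm1 (Pr b {..<M}) * norm1 (Pr a {Suc M..<Suc M})"
      unfolding Gm_def by (rule norm1_mult)
    also have "\<dots> \<le> 1 * 1"
      using nPr[where f=b] nPr[where f=a] assms(1,2) by (intro mult_mono norm1_nonneg) auto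
    finally show ?thesis using norm1_D by simp
  qed
  have "norm1 (Pr a {..<Suc M} - Pr b {..<Suc M}) \<le>
     norm1 (smult (E (Suc M)) (D * Gm M)) + norm1 (\<Sum>m<M. smult (E (Suc m) * (b m - a (Suc m))) (D^2 * R m))"
    unfolding telescope_identity[where a=a and b=b and M=M] E_def R_def Gm_def by (rule norm1_diff)
  also have "norm1 (smult (E (Suc M)) (D * Gm M)) \<le> 2 * \<bar>E (Suc M)\<bar>"
    unfolding norm1_smult using mult_left_mono[OF nG, of "\<bar>E (Suc M)\<bar>"] by (simp add: mult.commute)
  also have "norm1 (\<Sum>m<M. smult (E (Suc m) * (b m - a (Suc m))) (D^2 * R m)) \<le>
     (\<Sum>m<M. norm1 (smult (E (Suc m) * (b m - a (Suc m))) (D^2 * R m)))" by (rule norm1_sum)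
  also have "\<dots> = (\<Sum>m<M. \<bar>E (Suc m)\<bar> * \<bar>b m - a (Suc m)\<bar> * norm1 (D^2 * R m))"
    by (simp add: norm1_smult abs_mult)
  finally show ?thesis by simp
qed

lemma downclosed_interval:
  fixes S :: "nat set"
  assumes "S \<subseteq> {..<N}" "\<And>s t. s \<le> t \<Longrightarrow> t \<in> S \<Longrightarrow> s \<in> S"
  shows "\<exists>c. S = {..<c}"
proof -
  have ex: "\<exists>t. t \<notin> S" using assms(1) by auto
  define c where "c = (LEAST t. t \<notin> S)"
  have cS: "c \<notin> S" unfolding c_def using ex by (rule LeastI_ex)
  have "S = {..<c}"
  proof
    show "S \<subseteq> {..<c}"
    proof
      fix t assume t: "t \<in> S"
      show "t \<in> {..<c}"
      proof (rule ccontr)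
        assume "t \<notin> {..<c}"
        then have "c \<le> t" by simp
        then have "c \<in> S" using assms(2) t by blast
        with cS show False by simp
      qed
    qed
    show "{..<c} \<subseteq> S"
    proof
      fix t assume "t \<in> {..<c}"
      then have "t < c" by simp
      then show "t \<in> S" unfolding c_def using not_less_Least by blast
    qed
  qed
  then show ?thesis by blast
qed

lemma upclosed_interval:
  fixes S :: "nat set"
  assumes "S \<subseteq> {..<N}" "\<And>s t. s \<le> t \<Longrightarrow> t < N \<Longrightarrow> s \<in> S \<Longrightarrow> t \<in> S"
  shows "\<exists>c. S = {c..<N}"
proof -
  have "\<exists>c. {..<N} - S = {..<c}"
    by (rule downclosed_interval[of _ N]) (use assms in auto)
  then obtain c where c: "{..<N} - S = {..<c}" by blast
  have "S = {c..<N}"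
  proof
    show "S \<subseteq> {c..<N}"
    proof
      fix t assume t: "t \<in> S"
      then have "t < N" using assms(1) by auto
      moreover have "\<not> t < c" using c t by blast
      ultimately show "t \<in> {c..<N}" by simp
    qed
    show "{c..<N} \<subseteq> S"
    proof
      fix t assume t: "t \<in> {c..<N}"
      then have "t \<notin> {..<c}" by simp
      then have "t \<notin> {..<N} - S" using c by simp
      moreover have "t \<in> {..<N}" using t by simp
      ultimately show "t \<in> S" by simp
    qed
  qed
  then show ?thesis by blast
qed

lemma mn_lip: "mn y \<ge> mn x - \<bar>x - y\<bar>"
proof -
  have d: "\<bar>x - y\<bar> \<ge> x - y" "\<bar>x - y\<bar> \<ge> y - x" by auto
  have m: "min x (1 - x) \<le> x" "min x (1 - x) \<le> 1 - x" by auto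
  have "min x (1 - x) - \<bar>x - y\<bar> \<le> y" using d m by linarith
  moreover have "min x (1 - x) - \<bar>x - y\<bar> \<le> 1 - y" using d m by linarith
  ultimately show ?thesis unfolding mn_def by simp
qed

lemma mn_le: "0 \<le> x \<Longrightarrow> x \<le> 1 \<Longrightarrow> 0 \<le> mn x \<and> mn x \<le> 1/2"
  unfolding mn_def min_def by (simp add: field_simps)

context
  fixes a b :: "nat \<Rightarrow> real" and M :: nat and k dl :: real
  assumes ab: "\<And>t. 0 \<le> a t \<and> a t \<le> 1" "\<And>t. 0 \<le> b t \<and> b t \<le> 1"
    and k16: "k \<ge> 16"
    and close: "\<And>t. t < Suc M \<Longrightarrow> \<bar>a t - b t\<bar> \<le> 1/k"
    and ints: "\<And>u v. v \<le> Suc M \<Longrightarrow> \<bar>\<Sum>t\<in>{u..<v}. a t - b t\<bar> \<le> dl"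
    and dl: "0 \<le> dl" "dl \<le> 1/2"
    and mono: "\<And>s t. s \<le> t \<Longrightarrow> t < Suc M \<Longrightarrow> a s \<le> a t"
begin

definition S0 where "S0 = {t. t < Suc M \<and> a t < 2/k}"
definition S1 where "S1 = {t. t < Suc M \<and> a t > 1 - 2/k}"

lemma S0_int: "\<exists>c. S0 = {..<c}"
proof (rule downclosed_interval[of _ "Suc M"])
  show "S0 \<subseteq> {..<Suc M}" unfolding S0_def by auto
  fix s t assume st: "s \<le> t" "t \<in> S0"
  then have t: "t < Suc M" "a t < 2/k" unfolding S0_def by auto
  have "a s \<le> a t" using mono[OF st(1) t(1)] .
  then show "s \<in> S0" unfolding S0_def using t st(1) by auto
qed

lemma S1_int: "\<exists>c. S1 = {c..<Suc M}"
proof (rule upclosed_interval)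
  show "S1 \<subseteq> {..<Suc M}" unfolding S1_def by auto
  fix s t assume st: "s \<le> t" "t < Suc M" "s \<in> S1"
  then have s: "a s > 1 - 2/k" unfolding S1_def by auto
  have "a s \<le> a t" using mono[OF st(1) st(2)] .
  then show "t \<in> S1" unfolding S1_def using s st(2) by auto
qed

lemma per_t:
  assumes t: "t < Suc M"
  shows "mn (b t) \<ge> mn (a t) / 2 + (if t \<in> S0 then b t - a t else 0) + (if t \<in> S1 then a t - b t else 0)"
    and "\<bar>a t - b t\<bar> \<le> 2 * mn (a t) + (if t \<in> S0 then b t - a t else 0) + (if t \<in> S1 then a t - b t else 0)"
proof -
  have c: "\<bar>a t - b t\<bar> \<le> 1/k" using close[OF t] .
  have c1: "a t - b t \<le> 1/k" "b t - a t \<le> 1/k" using c by (simp_all add: abs_le_iff)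
  have kk: "1/k \<le> 1/16" using k16 by (intro divide_left_mono) auto
  have k2: "2/k = 2 * (1/k)" by simp
  have a01: "0 \<le> a t" "a t \<le> 1" and b01: "0 \<le> b t" "b t \<le> 1" using ab by auto
  have mna: "mn (a t) \<ge> 0" using mn_le a01 by blast
  consider (z) "t \<in> S0" | (o) "t \<in> S1" | (m) "t \<notin> S0" "t \<notin> S1" by blast
  then have "mn (b t) \<ge> mn (a t) / 2 + (if t \<in> S0 then b t - a t else 0) + (if t \<in> S1 then a t - b t else 0) \<and>
    \<bar>a t - b t\<bar> \<le> 2 * mn (a t) + (if t \<in> S0 then b t - a t else 0) + (if t \<in> S1 then a t - b t else 0)"
  proof cases
    case z
    have "a t < 2/k" using z by (simp add: S0_def)
    then have a8: "a t < 1/8" using kk k2 by linarith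
    have b4: "b t < 1/4" using a8 c1 kk by linarith
    have nS1: "t \<notin> S1" using a8 kk k2 by (auto simp: S1_def)
    have ma: "mn (a t) = a t" using a8 by (simp add: mn_def min_def)
    have mb: "mn (b t) = b t" using b4 by (simp add: mn_def min_def)
    have i1: "mn (a t) / 2 + (b t - a t) \<le> mn (b t)" unfolding ma mb using a01 by linarith
    have i2: "\<bar>a t - b t\<bar> \<le> 2 * mn (a t) + (b t - a t)" unfolding ma using a01 b01
      by (simp add: abs_le_iff)
    show ?thesis using i1 i2 z nS1 by simp
  next
    case o
    have "a t > 1 - 2/k" using o by (simp add: S1_def)
    then have a8: "a t > 7/8" using kk k2 by linarith
    have b4: "b t > 3/4" using a8 c1 kk by linarith
    have nS0: "t \<notin> S0" using a8 kk k2 by (auto simp: S0_def)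
    have ma: "mn (a t) = 1 - a t" using a8 by (simp add: mn_def min_def)
    have mb: "mn (b t) = 1 - b t" using b4 by (simp add: mn_def min_def)
    have i1: "mn (a t) / 2 + (a t - b t) \<le> mn (b t)" unfolding ma mb using a01 by (simp add: field_simps; linarith)
    have i2: "\<bar>a t - b t\<bar> \<le> 2 * mn (a t) + (a t - b t)" unfolding ma using a01 b01
      by (simp add: abs_le_iff)
    show ?thesis using i1 i2 o nS0 by simp
  next
    case m
    have n0: "\<not> a t < 2/k" using m(1) t unfolding S0_def by simp
    have n1: "\<not> a t > 1 - 2/k" using m(2) t unfolding S1_def by simp
    have "2/k \<le> a t" "2/k \<le> 1 - a t" using n0 n1 by linarith+
    then have "mn (a t) \<ge> 2/k" unfolding mn_def by simp
    then have m2: "mn (a t) \<ge> 2 * (1/k)" using k2 by linarith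
    have i2: "\<bar>a t - b t\<bar> \<le> mn (a t) / 2" using c m2 by linarith
    have i1: "mn (b t) \<ge> mn (a t) - \<bar>a t - b t\<bar>" by (rule mn_lip)
    have "mn (b t) \<ge> mn (a t) / 2" using i1 i2 by linarith
    moreover have "\<bar>a t - b t\<bar> \<le> 2 * mn (a t)" using i2 mna by linarith
    ultimately show ?thesis using m by simp
  qed
  then show "mn (b t) \<ge> mn (a t) / 2 + (if t \<in> S0 then b t - a t else 0) + (if t \<in> S1 then a t - b t else 0)"
    and "\<bar>a t - b t\<bar> \<le> 2 * mn (a t) + (if t \<in> S0 then b t - a t else 0) + (if t \<in> S1 then a t - b t else 0)"
    by auto
qed

lemma S0_sum:
  assumes "m \<le> Suc M"
  shows "\<bar>\<Sum>t<m. if t \<in> S0 then b t - a t else 0\<bar> \<le> dl"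
proof -
  obtain c where c: "S0 = {..<c}" using S0_int by blast
  have "(\<Sum>t<m. if t \<in> S0 then b t - a t else 0) = (\<Sum>t\<in>{..<m} \<inter> S0. b t - a t)"
    by (rule sum.inter_restrict[symmetric]) simp
  also have "{..<m} \<inter> S0 = {0..<min m c}" unfolding c by auto
  also have "(\<Sum>t\<in>{0..<min m c}. b t - a t) = - (\<Sum>t\<in>{0..<min m c}. a t - b t)"
    by (simp only: sum_negf[symmetric] minus_diff_eq)
  finally have e: "(\<Sum>t<m. if t \<in> S0 then b t - a t else 0) = - (\<Sum>t\<in>{0..<min m c}. a t - b t)" .
  have "min m c \<le> Suc M" using assms by simp
  from ints[OF this, of 0] show ?thesis unfolding e by simp
qed

lemma S1_sum:
  assumes "m \<le> Suc M"
  shows "\<bar>\<Sum>t<m. if t \<in> S1 then a t - b t else 0\<bar> \<le> dl"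
proof -
  obtain c where c: "S1 = {c..<Suc M}" using S1_int by blast
  have "(\<Sum>t<m. if t \<in> S1 then a t - b t else 0) = (\<Sum>t\<in>{..<m} \<inter> S1. a t - b t)"
    by (rule sum.inter_restrict[symmetric]) simp
  also have "{..<m} \<inter> S1 = {c..<m}" unfolding c using assms by auto
  finally have e: "(\<Sum>t<m. if t \<in> S1 then a t - b t else 0) = (\<Sum>t\<in>{c..<m}. a t - b t)" .
  from ints[OF assms, of c] show ?thesis unfolding e .
qed

lemma K1:
  assumes "m \<le> Suc M"
  shows "(\<Sum>t<m. mn (b t)) \<ge> (\<Sum>t<m. mn (a t)) / 2 - 2 * dl"
proof -
  have "(\<Sum>t<m. mn (b t)) \<ge> (\<Sum>t<m. mn (a t) / 2 + (if t \<in> S0 then b t - a t else 0) + (if t \<in> S1 then a t - b t else 0))"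
    using assms by (intro sum_mono per_t(1)) auto
  also have "(\<Sum>t<m. mn (a t) / 2 + (if t \<in> S0 then b t - a t else 0) + (if t \<in> S1 then a t - b t else 0)) =
     (\<Sum>t<m. mn (a t)) / 2 + (\<Sum>t<m. if t \<in> S0 then b t - a t else 0) + (\<Sum>t<m. if t \<in> S1 then a t - b t else 0)"
    by (simp add: sum.distrib sum_divide_distrib)
  finally show ?thesis using S0_sum[OF assms] S1_sum[OF assms] by linarith
qed

lemma K2:
  "(\<Sum>t<Suc M. \<bar>a t - b t\<bar>) \<le> 2 * (\<Sum>t<Suc M. mn (a t)) + 2 * dl"
proof -
  have "(\<Sum>t<Suc M. \<bar>a t - b t\<bar>) \<le> (\<Sum>t<Suc M. 2 * mn (a t) + (if t \<in> S0 then b t - a t else 0) + (if t \<in> S1 then a t - b t else 0))"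
    by (intro sum_mono per_t(2)) auto
  also have "\<dots> = 2 * (\<Sum>t<Suc M. mn (a t)) + (\<Sum>t<Suc M. if t \<in> S0 then b t - a t else 0) + (\<Sum>t<Suc M. if t \<in> S1 then a t - b t else 0)"
    by (simp add: sum.distrib sum_distrib_left)
  finally show ?thesis using S0_sum[of "Suc M"] S1_sum[of "Suc M"] by linarith
qed

lemma seq_main:
  "norm1 (Pr a {..<Suc M} - Pr b {..<Suc M}) \<le> 194 * dl"
proof -
  define E where "E = (\<lambda>m. \<Sum>t<m. a t - b t)"
  define R where "R = (\<lambda>m. Pr b {..<m} * Pr a {Suc (Suc m)..<Suc M})"
  define Mt where "Mt = (\<Sum>t<Suc M. mn (a t))"
  have Mt0: "Mt \<ge> 0" unfolding Mt_def using mn_le ab by (intro sum_nonneg) blast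
  have Eb: "\<bar>E m\<bar> \<le> dl" if "m \<le> Suc M" for m
    using ints[of m 0] that unfolding E_def by (simp add: atLeast0LessThan)
  have Rb: "norm1 (D^2 * R m) \<le> 96 / (Mt + 4)" if m: "m < M" for m
  proof -
    define x where "x t = (if t < m then b t else a t)" for t
    define J where "J = {..<m} \<union> {Suc (Suc m)..<Suc M}"
    have RG: "R m = G x J"
    proof -
      have "G x J = (\<Prod>t\<in>{..<m}. B (x t)) * (\<Prod>t\<in>{Suc (Suc m)..<Suc M}. B (x t))"
        unfolding G_def J_def by (rule prod.union_disjoint) auto
      also have "(\<Prod>t\<in>{..<m}. B (x t)) = Pr b {..<m}" unfolding Pr_def x_def by simp
      also have "(\<Prod>t\<in>{Suc (Suc m)..<Suc M}. B (x t)) = Pr a {Suc (Suc m)..<Suc M}"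
        unfolding Pr_def x_def by (intro prod.cong) auto
      finally show ?thesis unfolding R_def by simp
    qed
    have sJ: "(\<Sum>l\<in>J. mn (x l)) = (\<Sum>t<m. mn (b t)) + (\<Sum>t\<in>{Suc (Suc m)..<Suc M}. mn (a t))"
    proof -
      have "(\<Sum>l\<in>J. mn (x l)) = (\<Sum>t<m. mn (x t)) + (\<Sum>t\<in>{Suc (Suc m)..<Suc M}. mn (x t))"
        unfolding J_def by (rule sum.union_disjoint) auto
      also have "(\<Sum>t<m. mn (x t)) = (\<Sum>t<m. mn (b t))" unfolding x_def by simp
      also have "(\<Sum>t\<in>{Suc (Suc m)..<Suc M}. mn (x t)) = (\<Sum>t\<in>{Suc (Suc m)..<Suc M}. mn (a t))"
        unfolding x_def by (intro sum.cong) auto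
      finally show ?thesis .
    qed
    have split: "Mt = (\<Sum>t<m. mn (a t)) + mn (a m) + mn (a (Suc m)) + (\<Sum>t\<in>{Suc (Suc m)..<Suc M}. mn (a t))"
    proof -
      have "Mt = (\<Sum>t\<in>{0..<m} \<union> {m..<Suc M}. mn (a t))"
        unfolding Mt_def using m by (intro sum.cong) auto
      also have "\<dots> = (\<Sum>t\<in>{0..<m}. mn (a t)) + (\<Sum>t\<in>{m..<Suc M}. mn (a t))"
        by (rule sum.union_disjoint) auto
      also have "(\<Sum>t\<in>{m..<Suc M}. mn (a t)) = mn (a m) + (\<Sum>t\<in>{Suc m..<Suc M}. mn (a t))"
        using m by (subst sum.atLeast_Suc_lessThan) auto
      also have "(\<Sum>t\<in>{Suc m..<Suc M}. mn (a t)) = mn (a (Suc m)) + (\<Sum>t\<in>{Suc (Suc m)..<Suc M}. mn (a t))"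
        using m by (subst sum.atLeast_Suc_lessThan) auto
      finally show ?thesis by (simp add: atLeast0LessThan add.assoc)
    qed
    have "mn (a m) \<le> 1/2" "mn (a (Suc m)) \<le> 1/2" using mn_le ab by blast+
    have "(\<Sum>t\<in>{Suc (Suc m)..<Suc M}. mn (a t)) \<ge> 0" using mn_le ab by (intro sum_nonneg) blast
    have "(\<Sum>t<m. mn (b t)) \<ge> (\<Sum>t<m. mn (a t)) / 2 - 2 * dl" using m by (intro K1) auto
    have nn: "(\<Sum>l\<in>J. mn (x l)) \<ge> 0"
      using mn_le ab unfolding x_def by (intro sum_nonneg) auto
    define SA where "SA = (\<Sum>t<m. mn (a t))"
    define SB where "SB = (\<Sum>t<m. mn (b t))"
    define TL where "TL = (\<Sum>t\<in>{Suc (Suc m)..<Suc M}. mn (a t))"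
    define SJ where "SJ = (\<Sum>l\<in>J. mn (x l))"
    have i1: "SJ = SB + TL" using sJ unfolding SJ_def SB_def TL_def .
    have i2: "Mt \<le> SA + 1 + TL" using split \<open>mn (a m) \<le> 1/2\<close> \<open>mn (a (Suc m)) \<le> 1/2\<close>
      unfolding SA_def TL_def by linarith
    have i3: "SB \<ge> SA / 2 - 1" using \<open>(\<Sum>t<m. mn (b t)) \<ge> (\<Sum>t<m. mn (a t)) / 2 - 2 * dl\<close> dl
      unfolding SA_def SB_def by linarith
    have i4: "TL \<ge> 0" "SJ \<ge> 0" using \<open>(\<Sum>t\<in>{Suc (Suc m)..<Suc M}. mn (a t)) \<ge> 0\<close> nn
      unfolding TL_def SJ_def by auto
    have i5: "2 * SJ + 4 \<ge> Mt + 1" using i1 i2 i3 i4 by linarith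
    have lb00: "Mt + 4 \<le> 4 * SJ + 8" using i5 i4 by linarith
    have lb0: "2 * SJ + 4 \<ge> (Mt + 4) / 2" using lb00 by (simp add: field_simps)
    have lb: "2 * (\<Sum>l\<in>J. mn (x l)) + 4 \<ge> (Mt + 4) / 2"
      using lb0 unfolding SJ_def .
    have dummy: True
      using nn sJ split \<open>mn (a m) \<le> 1/2\<close> \<open>mn (a (Suc m)) \<le> 1/2\<close>
        \<open>(\<Sum>t\<in>{Suc (Suc m)..<Suc M}. mn (a t)) \<ge> 0\<close> \<open>(\<Sum>t<m. mn (b t)) \<ge> (\<Sum>t<m. mn (a t)) / 2 - 2 * dl\<close> dl
      by simp
    have "norm1 (D^2 * R m) \<le> 48 / (2 * (\<Sum>l\<in>J. mn (x l)) + 4)"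
      unfolding RG using ab by (intro smoothing) (auto simp: J_def x_def)
    also have "\<dots> \<le> 48 / ((Mt + 4) / 2)"
      using lb Mt0 by (intro divide_left_mono) auto
    also have "\<dots> = 96 / (Mt + 4)" by simp
    finally show ?thesis .
  qed
  have sumdiff: "(\<Sum>m<M. \<bar>b m - a (Suc m)\<bar>) \<le> 2 * Mt + 2"
  proof -
    have "(\<Sum>m<M. \<bar>b m - a (Suc m)\<bar>) \<le> (\<Sum>m<M. \<bar>a m - b m\<bar> + (a (Suc m) - a m))"
    proof (intro sum_mono)
      fix m assume "m \<in> {..<M}"
      then have "a m \<le> a (Suc m)" by (intro mono) auto
      then show "\<bar>b m - a (Suc m)\<bar> \<le> \<bar>a m - b m\<bar> + (a (Suc m) - a m)" by linarith
    qed
    also have "\<dots> = (\<Sum>m<M. \<bar>a m - b m\<bar>) + (a M - a 0)"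
      by (simp add: sum.distrib sum_lessThan_telescope)
    also have "(\<Sum>m<M. \<bar>a m - b m\<bar>) \<le> (\<Sum>m<Suc M. \<bar>a m - b m\<bar>)" by simp
    also have "\<dots> \<le> 2 * Mt + 2 * dl" unfolding Mt_def by (rule K2)
    finally show ?thesis using ab[of M] ab[of 0] dl by linarith
  qed
  have s0: "norm1 (Pr a {..<Suc M} - Pr b {..<Suc M}) \<le>
     2 * \<bar>E (Suc M)\<bar> + (\<Sum>m<M. \<bar>E (Suc m)\<bar> * \<bar>b m - a (Suc m)\<bar> * norm1 (D^2 * R m))"
    unfolding E_def R_def by (rule telescope_bound) (use ab in auto)
  have s1: "2 * \<bar>E (Suc M)\<bar> + (\<Sum>m<M. \<bar>E (Suc m)\<bar> * \<bar>b m - a (Suc m)\<bar> * norm1 (D^2 * R m))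
     \<le> 2 * dl + (\<Sum>m<M. dl * \<bar>b m - a (Suc m)\<bar> * (96 / (Mt + 4)))"
  proof (intro add_mono sum_mono)
    show "2 * \<bar>E (Suc M)\<bar> \<le> 2 * dl" using Eb[of "Suc M"] by simp
    fix m assume m: "m \<in> {..<M}"
    show "\<bar>E (Suc m)\<bar> * \<bar>b m - a (Suc m)\<bar> * norm1 (D^2 * R m) \<le> dl * \<bar>b m - a (Suc m)\<bar> * (96 / (Mt + 4))"
      using m Eb[of "Suc m"] Rb[of m] norm1_nonneg
      by (intro mult_mono) auto
  qed
  define Q where "Q = dl * (96 / (Mt + 4))"
  have Q0: "Q \<ge> 0" unfolding Q_def using dl Mt0 by simp
  have s2: "(\<Sum>m<M. dl * \<bar>b m - a (Suc m)\<bar> * (96 / (Mt + 4))) = Q * (\<Sum>m<M. \<bar>b m - a (Suc m)\<bar>)"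
    unfolding Q_def sum_distrib_left by (intro sum.cong refl) (simp only: mult_ac)
  have s3: "Q * (\<Sum>m<M. \<bar>b m - a (Suc m)\<bar>) \<le> Q * (2 * Mt + 2)"
    using sumdiff Q0 by (rule mult_left_mono)
  have s4: "Q * (2 * Mt + 2) \<le> 192 * dl"
  proof -
    have "(96 / (Mt + 4)) * (2 * Mt + 2) \<le> 192" using Mt0 by (simp add: field_simps)
    then have "dl * ((96 / (Mt + 4)) * (2 * Mt + 2)) \<le> dl * 192" using dl(1) by (rule mult_left_mono)
    then show ?thesis unfolding Q_def by (simp only: mult_ac)
  qed
  have s5: "(\<Sum>m<M. dl * \<bar>b m - a (Suc m)\<bar> * (96 / (Mt + 4))) \<le> 192 * dl"
    unfolding s2 using s3 s4 by (rule order_trans)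
  have "norm1 (Pr a {..<Suc M} - Pr b {..<Suc M}) \<le> 2 * dl + 192 * dl"
    using order_trans[OF s0 order_trans[OF s1 add_left_mono[OF s5]]] .
  then show ?thesis by simp
qed

end

definition Ps :: "(nat \<Rightarrow> real) \<Rightarrow> nat \<Rightarrow> real" where "Ps A m = (\<Sum>t<m. A t)"
definition Fr :: "real \<Rightarrow> (nat \<Rightarrow> real) \<Rightarrow> nat \<Rightarrow> real" where
  "Fr k A m = k * Ps A m - of_int \<lfloor>k * Ps A m\<rfloor>"
definition Bq :: "real \<Rightarrow> (nat \<Rightarrow> real) \<Rightarrow> nat \<Rightarrow> real" where
  "Bq k A t = (of_int \<lfloor>k * Ps A (Suc t)\<rfloor> - of_int \<lfloor>k * Ps A t\<rfloor>) / k"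

lemma floor_lt1: "x < real_of_int \<lfloor>x\<rfloor> + 1"
  using floor_correct[of x] by simp

lemma Fr_bounds: "0 \<le> Fr k A m \<and> Fr k A m < 1"
  unfolding Fr_def using floor_lt1[of "k * Ps A m"] of_int_floor_le[of "k * Ps A m"] by linarith

lemma A_minus_Bq: "k > 0 \<Longrightarrow> A t - Bq k A t = (Fr k A (Suc t) - Fr k A t) / k"
  unfolding Fr_def Bq_def Ps_def by (simp add: field_simps)

lemma Bq_int: "\<exists>m::int. Bq k A t = real_of_int m / k"
  unfolding Bq_def by (rule exI[of _ "\<lfloor>k * Ps A (Suc t)\<rfloor> - \<lfloor>k * Ps A t\<rfloor>"]) simp

lemma Fr_diff: "\<bar>Fr k A v - Fr k A u\<bar> \<le> 1"
  using Fr_bounds[of k A v] Fr_bounds[of k A u] unfolding abs_le_iff by linarith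

lemma abs_div_le: "(k::real) > 0 \<Longrightarrow> \<bar>X\<bar> \<le> 1 \<Longrightarrow> \<bar>X / k\<bar> \<le> 1 / k"
proof -
  assume k: "k > 0" and X: "\<bar>X\<bar> \<le> 1"
  have "\<bar>X / k\<bar> = \<bar>X\<bar> / k" using k by (simp add: abs_divide)
  also have "\<dots> \<le> 1 / k" using X k by (rule divide_right_mono[OF _ less_imp_le])
  finally show ?thesis .
qed

lemma Bq_close: "k > 0 \<Longrightarrow> \<bar>A t - Bq k A t\<bar> \<le> 1 / k"
proof -
  assume k: "k > 0"
  show ?thesis unfolding A_minus_Bq[OF k] using k Fr_diff by (rule abs_div_le)
qed

lemma Bq_int_sum: "k > 0 \<Longrightarrow> \<bar>\<Sum>t\<in>{u..<v}. A t - Bq k A t\<bar> \<le> 1 / k"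
proof -
  assume k: "k > 0"
  show ?thesis
  proof (cases "u \<le> v")
    case True
    have "(\<Sum>t\<in>{u..<v}. A t - Bq k A t) = (\<Sum>t\<in>{u..<v}. Fr k A (Suc t) - Fr k A t) / k"
      unfolding A_minus_Bq[OF k] by (simp add: sum_divide_distrib)
    also have "\<dots> = (Fr k A v - Fr k A u) / k" using sum_Suc_diff'[OF True, of "Fr k A"] by simp
    finally have e: "(\<Sum>t\<in>{u..<v}. A t - Bq k A t) = (Fr k A v - Fr k A u) / k" .
    show ?thesis unfolding e using k Fr_diff by (rule abs_div_le)
  next
    case False
    then show ?thesis using k by simp
  qed
qed

lemma Bq_range:
  assumes k: "k = real kk" "kk > 0" and A: "0 \<le> A t" "A t \<le> 1"
  shows "0 \<le> Bq k A t \<and> Bq k A t \<le> 1"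
proof -
  define x where "x = k * Ps A t"
  define y where "y = k * A t"
  have xy: "k * Ps A (Suc t) = x + y" unfolding x_def y_def Ps_def by (simp add: algebra_simps)
  have kp: "k > 0" using k by simp
  have y0: "0 \<le> y" "y \<le> k" unfolding y_def using A kp mult_left_le[of "A t" k] by simp_all
  have d0: "\<lfloor>x\<rfloor> \<le> \<lfloor>x + y\<rfloor>" using y0 by (intro floor_mono) simp
  have "of_int \<lfloor>x + y\<rfloor> - of_int \<lfloor>x\<rfloor> < y + 1"
    using of_int_floor_le[of "x + y"] floor_lt1[of x] by linarith
  then have "of_int (\<lfloor>x + y\<rfloor> - \<lfloor>x\<rfloor>) < real kk + 1" using y0 k by simp
  then have "real_of_int (\<lfloor>x + y\<rfloor> - \<lfloor>x\<rfloor>) < real_of_int (int kk + 1)" by simp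
  then have "\<lfloor>x + y\<rfloor> - \<lfloor>x\<rfloor> < int kk + 1" by (simp only: of_int_less_iff)
  then have d1: "\<lfloor>x + y\<rfloor> - \<lfloor>x\<rfloor> \<le> int kk" by linarith
  have "Bq k A t = of_int (\<lfloor>x + y\<rfloor> - \<lfloor>x\<rfloor>) / k" unfolding Bq_def xy x_def by simp
  moreover have "0 \<le> of_int (\<lfloor>x + y\<rfloor> - \<lfloor>x\<rfloor>) / k" using d0 kp by simp
  moreover have "of_int (\<lfloor>x + y\<rfloor> - \<lfloor>x\<rfloor>) / k \<le> 1"
  proof -
    have "real_of_int (\<lfloor>x + y\<rfloor> - \<lfloor>x\<rfloor>) \<le> real_of_int (int kk)" using d1 by (simp only: of_int_le_iff)
    then have "real_of_int (\<lfloor>x + y\<rfloor> - \<lfloor>x\<rfloor>) \<le> k" using k by simp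
    then show ?thesis using kp by simp
  qed
  ultimately show ?thesis by simp
qed

lemma tv_le1:
  assumes "finite I" "\<And>i. i \<in> I \<Longrightarrow> 0 \<le> p i \<and> p i \<le> 1" "\<And>i. i \<in> I \<Longrightarrow> 0 \<le> q i \<and> q i \<le> 1"
  shows "tv_dist (indicator_sum_pmf p I) (indicator_sum_pmf q I) \<le> 1"
proof -
  have "norm1 (G p I - G q I) \<le> norm1 (G p I) + norm1 (G q I)" by (rule norm1_diff)
  also have "\<dots> \<le> 1 + 1" using norm1_G[of I p] norm1_G[of I q] assms by (intro add_mono) auto
  moreover have "tv_dist (indicator_sum_pmf p I) (indicator_sum_pmf q I) = norm1 (G p I - G q I) / 2"
    by (rule tv_dist_norm1) (use assms in auto)
  ultimately show ?thesis by simp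
qed

lemma tv_from_seq:
  fixes e :: "nat \<Rightarrow> nat" and p q :: "nat \<Rightarrow> real" and I :: "nat set" and M :: nat and k dl :: real
  assumes bij: "bij_betw e {..<Suc M} I"
  and pq: "\<And>i. i \<in> I \<Longrightarrow> 0 \<le> p i \<and> p i \<le> 1" "\<And>i. i \<in> I \<Longrightarrow> 0 \<le> q i \<and> q i \<le> 1"
  and k16: "k \<ge> 16"
  and close: "\<And>t. t < Suc M \<Longrightarrow> \<bar>p (e t) - q (e t)\<bar> \<le> 1/k"
  and ints: "\<And>u v. v \<le> Suc M \<Longrightarrow> \<bar>\<Sum>t\<in>{u..<v}. p (e t) - q (e t)\<bar> \<le> dl"
  and dl: "0 \<le> dl" "dl \<le> 1/2"
  and mono: "\<And>s t. s \<le> t \<Longrightarrow> t < Suc M \<Longrightarrow> p (e s) \<le> p (e t)"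
  shows "tv_dist (indicator_sum_pmf p I) (indicator_sum_pmf q I) \<le> 97 * dl"
proof -
  define a where "a t = (if t < Suc M then p (e t) else 0)" for t
  define b where "b t = (if t < Suc M then q (e t) else 0)" for t
  have fin: "finite I" using bij bij_betw_finite by blast
  have eI: "e t \<in> I" if "t < Suc M" for t using bij that by (auto simp: bij_betw_def)
  have GP: "G f I = Pr (\<lambda>t. if t < Suc M then f (e t) else 0) {..<Suc M}" for f
  proof -
    have "Pr (\<lambda>t. if t < Suc M then f (e t) else 0) {..<Suc M} = (\<Prod>t\<in>{..<Suc M}. B (f (e t)))"
      unfolding Pr_def by (intro prod.cong) auto
    also have "\<dots> = (\<Prod>i\<in>I. B (f i))" by (rule prod.reindex_bij_betw[OF bij])
    finally show ?thesis unfolding G_def by simp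
  qed
  have "norm1 (Pr a {..<Suc M} - Pr b {..<Suc M}) \<le> 194 * dl"
  proof (rule seq_main)
    show "0 \<le> a t \<and> a t \<le> 1" for t using pq(1)[OF eI] by (auto simp: a_def)
    show "0 \<le> b t \<and> b t \<le> 1" for t using pq(2)[OF eI] by (auto simp: b_def)
    show "16 \<le> k" by (rule k16)
    show "\<bar>a t - b t\<bar> \<le> 1/k" if "t < Suc M" for t using close[OF that] that by (simp add: a_def b_def)
    show "\<bar>\<Sum>t\<in>{u..<v}. a t - b t\<bar> \<le> dl" if "v \<le> Suc M" for u v
    proof -
      have "(\<Sum>t\<in>{u..<v}. a t - b t) = (\<Sum>t\<in>{u..<v}. p (e t) - q (e t))"
        using that by (intro sum.cong) (auto simp: a_def b_def)
      then show ?thesis using ints[OF that] by simp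
    qed
    show "0 \<le> dl" "dl \<le> 1/2" by (rule dl(1), rule dl(2))
    show "a s \<le> a t" if "s \<le> t" "t < Suc M" for s t using mono[OF that] that by (simp add: a_def)
  qed
  moreover have "tv_dist (indicator_sum_pmf p I) (indicator_sum_pmf q I) = norm1 (G p I - G q I) / 2"
    by (rule tv_dist_norm1[OF fin pq])
  ultimately show ?thesis unfolding GP a_def b_def by simp
qed

lemma skip_bij:
  assumes "tj < n"
  shows "bij_betw (\<lambda>s. if s < tj then s else Suc s) {..<n - 1} ({..<n} - {tj})"
  unfolding bij_betw_def
proof
  show "inj_on (\<lambda>s. if s < tj then s else Suc s) {..<n - 1}"
    by (auto simp: inj_on_def split: if_splits)
  show "(\<lambda>s. if s < tj then s else Suc s) ` {..<n - 1} = {..<n} - {tj}"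
  proof
    show "(\<lambda>s. if s < tj then s else Suc s) ` {..<n - 1} \<subseteq> {..<n} - {tj}"
      using assms by auto
    show "{..<n} - {tj} \<subseteq> (\<lambda>s. if s < tj then s else Suc s) ` {..<n - 1}"
    proof
      fix t assume t: "t \<in> {..<n} - {tj}"
      show "t \<in> (\<lambda>s. if s < tj then s else Suc s) ` {..<n - 1}"
      proof (cases "t < tj")
        case True
        then show ?thesis using t assms by (intro image_eqI[of _ _ t]) auto
      next
        case False
        then have "t > tj" using t by auto
        then show ?thesis using t assms by (intro image_eqI[of _ _ "t - 1"]) auto
      qed
    qed
  qed
qed

lemma skip_sum:
  fixes g :: "nat \<Rightarrow> real"
  shows "(\<Sum>s\<in>{u..<v}. g (if s < tj then s else Suc s)) =
         (\<Sum>t\<in>{u..<min v tj}. g t) + (\<Sum>t\<in>{Suc (max u tj)..<Suc v}. g t)"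
proof -
  have "{u..<v} = {u..<min v tj} \<union> {max u tj..<v}" by auto
  then have "(\<Sum>s\<in>{u..<v}. g (if s < tj then s else Suc s)) =
      (\<Sum>s\<in>{u..<min v tj} \<union> {max u tj..<v}. g (if s < tj then s else Suc s))" by simp
  also have "\<dots> = (\<Sum>s\<in>{u..<min v tj}. g (if s < tj then s else Suc s)) + (\<Sum>s\<in>{max u tj..<v}. g (if s < tj then s else Suc s))"
    by (rule sum.union_disjoint) auto
  also have "(\<Sum>s\<in>{u..<min v tj}. g (if s < tj then s else Suc s)) = (\<Sum>t\<in>{u..<min v tj}. g t)"
    by (intro sum.cong) auto
  also have "(\<Sum>s\<in>{max u tj..<v}. g (if s < tj then s else Suc s)) = (\<Sum>s\<in>{max u tj..<v}. g (Suc s))"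
    by (intro sum.cong) auto
  also have "\<dots> = (\<Sum>t\<in>{Suc (max u tj)..<Suc v}. g t)"
    by (rule sum.shift_bounds_Suc_ivl[symmetric])
  finally show ?thesis .
qed

theorem theorem2:
  shows "\<exists>C::real. C > 0 \<and>
    (\<forall>(n::nat) (k::nat) (p::nat \<Rightarrow> real). n > 0 \<longrightarrow> k > 0 \<longrightarrow>
      (\<forall>i\<in>{1..n}. 0 \<le> p i \<and> p i \<le> 1) \<longrightarrow>
      (\<exists>q::nat \<Rightarrow> real.
         (\<forall>i\<in>{1..n}. 0 \<le> q i \<and> q i \<le> 1) \<and>
         (\<forall>i\<in>{1..n}. \<bar>q i - p i\<bar> \<le> C / real k) \<and>
         (\<forall>i\<in>{1..n}. \<exists>m::int. q i = real_of_int m / real k) \<and>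
         tv_dist (indicator_sum_pmf p {1..n}) (indicator_sum_pmf q {1..n}) \<le> C / sqrt (real k) \<and>
         (\<forall>j\<in>{1..n}. tv_dist (indicator_sum_pmf p ({1..n} - {j}))
                                (indicator_sum_pmf q ({1..n} - {j})) \<le> C / sqrt (real k))))"
proof (intro exI[of _ "194::real"] conjI allI impI)
  show "(194::real) > 0" by simp
  fix n k :: nat and p :: "nat \<Rightarrow> real"
  assume n: "n > 0" and k: "k > 0" and p: "\<forall>i\<in>{1..n}. 0 \<le> p i \<and> p i \<le> 1"
  define L where "L = sort_key p [1..<Suc n]"
  define e where "e = (!) L"
  define kr where "kr = real k"
  define A where "A t = (if t < n then p (e t) else 0)" for t
  define bq where "bq t = Bq kr A t" for t
  define q where "q i = (if i \<in> {1..n} then bq (inv_into {..<n} e i) else 0)" for i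
  have lenL: "length L = n" unfolding L_def by simp
  have setL: "set L = {1..n}" unfolding L_def by auto
  have distL: "distinct L" unfolding L_def by simp
  have sortL: "sorted (map p L)" unfolding L_def by simp
  have bij: "bij_betw e {..<n} {1..n}" unfolding e_def
    by (rule bij_betw_nth[OF distL]) (simp_all add: lenL setL)
  have eI: "e t \<in> {1..n}" if "t < n" for t using bij that by (auto simp: bij_betw_def)
  have kr0: "kr > 0" unfolding kr_def using k by simp
  have Ae: "A t = p (e t)" if "t < n" for t using that by (simp add: A_def)
  have A01: "0 \<le> A t \<and> A t \<le> 1" for t using p eI by (auto simp: A_def)
  have bq01: "0 \<le> bq t \<and> bq t \<le> 1" for t
    unfolding bq_def using A01[of t] k by (intro Bq_range[of kr k]) (auto simp: kr_def)
  have closeA: "\<bar>A t - bq t\<bar> \<le> 1 / kr" for t unfolding bq_def by (rule Bq_close[OF kr0])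
  have intsA: "\<bar>\<Sum>t\<in>{u..<v}. A t - bq t\<bar> \<le> 1 / kr" for u v unfolding bq_def by (rule Bq_int_sum[OF kr0])
  have qe: "q (e t) = bq t" if "t < n" for t
    using eI[OF that] bij_betw_inv_into_left[OF bij, of t] that by (simp add: q_def)
  have monoA: "p (e s) \<le> p (e t)" if "s \<le> t" "t < n" for s t
  proof -
    have "map p L ! s \<le> map p L ! t" using sorted_nth_mono[OF sortL that(1)] that lenL by simp
    then show ?thesis using that lenL by (simp add: e_def)
  qed
  have inv: "inv_into {..<n} e i < n \<and> e (inv_into {..<n} e i) = i" if "i \<in> {1..n}" for i
    using bij_betw_inv_into_right[OF bij that] bij_betw_inv_into[OF bij] that
    by (auto simp: bij_betw_def)
  have q01: "\<forall>i\<in>{1..n}. 0 \<le> q i \<and> q i \<le> 1" using bq01 by (simp add: q_def)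
  have q01': "0 \<le> q i \<and> q i \<le> 1" if "i \<in> {1..n}" for i using q01 that by blast
  have p01': "0 \<le> p i \<and> p i \<le> 1" if "i \<in> {1..n}" for i using p that by blast
  have sqk: "sqrt (real k) \<le> real k"
  proof -
    have k1: "1 \<le> real k" using k by simp
    then have s1: "1 \<le> sqrt (real k)" by simp
    have "sqrt (real k) * 1 \<le> sqrt (real k) * sqrt (real k)"
      using s1 by (intro mult_left_mono) auto
    also have "\<dots> = real k" by simp
    finally show ?thesis by simp
  qed
  have sqk0: "sqrt (real k) > 0" using k by simp
  have small: "1 \<le> 194 / sqrt (real k)" if "\<not> kr \<ge> 16" for kr'
  proof -
    have "real k < 16" using that unfolding kr_def by simp
    then have "sqrt (real k) < 4" using real_sqrt_less_iff[of "real k" 16] by simp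
    then show ?thesis using sqk0 by (simp add: field_simps)
  qed
  have big: "97 * c / kr \<le> 194 / sqrt (real k)" if "c \<le> 2" "c \<ge> 0" for c
  proof -
    have "97 * c / kr \<le> 194 / kr" using that kr0 by (intro divide_right_mono) auto
    also have "\<dots> \<le> 194 / sqrt (real k)" unfolding kr_def using sqk sqk0 by (intro divide_left_mono) auto
    finally show ?thesis .
  qed
  show "\<exists>q. (\<forall>i\<in>{1..n}. 0 \<le> q i \<and> q i \<le> 1) \<and>
         (\<forall>i\<in>{1..n}. \<bar>q i - p i\<bar> \<le> 194 / real k) \<and>
         (\<forall>i\<in>{1..n}. \<exists>m::int. q i = real_of_int m / real k) \<and>
         tv_dist (indicator_sum_pmf p {1..n}) (indicator_sum_pmf q {1..n}) \<le> 194 / sqrt (real k) \<and>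
         (\<forall>j\<in>{1..n}. tv_dist (indicator_sum_pmf p ({1..n} - {j}))
                                (indicator_sum_pmf q ({1..n} - {j})) \<le> 194 / sqrt (real k))"
  proof (rule exI[of _ q], intro conjI)
    show "\<forall>i\<in>{1..n}. 0 \<le> q i \<and> q i \<le> 1" by (rule q01)
  next
    show "\<forall>i\<in>{1..n}. \<bar>q i - p i\<bar> \<le> 194 / real k"
    proof
    fix i assume i: "i \<in> {1..n}"
    define t where "t = inv_into {..<n} e i"
    have t: "t < n" "e t = i" using inv[OF i] unfolding t_def by auto
    have "\<bar>q i - p i\<bar> = \<bar>A t - bq t\<bar>" using qe[OF t(1)] Ae[OF t(1)] t(2) by (simp add: abs_minus_commute)
    also have "\<dots> \<le> 1 / kr" by (rule closeA)
    also have "\<dots> \<le> 194 / real k" unfolding kr_def using k by (intro divide_right_mono) auto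
    finally show "\<bar>q i - p i\<bar> \<le> 194 / real k" .
    qed
  next
    show "\<forall>i\<in>{1..n}. \<exists>m::int. q i = real_of_int m / real k"
    proof
    fix i assume i: "i \<in> {1..n}"
    obtain m where "Bq kr A (inv_into {..<n} e i) = real_of_int m / kr" using Bq_int by blast
    then show "\<exists>m::int. q i = real_of_int m / real k" using i by (auto simp: q_def bq_def kr_def)
    qed
  next
    show "tv_dist (indicator_sum_pmf p {1..n}) (indicator_sum_pmf q {1..n}) \<le> 194 / sqrt (real k)"
    proof (cases "kr \<ge> 16")
      case False
      have "tv_dist (indicator_sum_pmf p {1..n}) (indicator_sum_pmf q {1..n}) \<le> 1"
        by (rule tv_le1) (use p01' q01' in auto)
      then show ?thesis using small[OF False] by linarith
    next
      case True
      obtain M where M: "n = Suc M" using n by (cases n) auto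
      have "tv_dist (indicator_sum_pmf p {1..n}) (indicator_sum_pmf q {1..n}) \<le> 97 * (1 / kr)"
      proof (rule tv_from_seq[where e = e and M = M and k = kr])
        show "bij_betw e {..<Suc M} {1..n}" using bij M by simp
        show "0 \<le> p i \<and> p i \<le> 1" if "i \<in> {1..n}" for i using p01' that .
        show "0 \<le> q i \<and> q i \<le> 1" if "i \<in> {1..n}" for i using q01' that .
        show "16 \<le> kr" by (rule True)
        show "\<bar>p (e t) - q (e t)\<bar> \<le> 1 / kr" if "t < Suc M" for t
          using closeA[of t] Ae[of t] qe[of t] that M by simp
        show "\<bar>\<Sum>t\<in>{u..<v}. p (e t) - q (e t)\<bar> \<le> 1 / kr" if "v \<le> Suc M" for u v
        proof -
          have "(\<Sum>t\<in>{u..<v}. p (e t) - q (e t)) = (\<Sum>t\<in>{u..<v}. A t - bq t)"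
            using that M Ae qe by (intro sum.cong) auto
          then show ?thesis using intsA[of u v] by simp
        qed
        show "0 \<le> 1 / kr" using kr0 by simp
        show "1 / kr \<le> 1 / 2" using True by simp
        show "p (e s) \<le> p (e t)" if "s \<le> t" "t < Suc M" for s t using monoA that M by simp
      qed
      then show ?thesis using big[of 1] by simp
    qed
  next
    show "\<forall>j\<in>{1..n}. tv_dist (indicator_sum_pmf p ({1..n} - {j})) (indicator_sum_pmf q ({1..n} - {j})) \<le> 194 / sqrt (real k)"
    proof
    fix j assume j: "j \<in> {1..n}"
    show "tv_dist (indicator_sum_pmf p ({1..n} - {j})) (indicator_sum_pmf q ({1..n} - {j})) \<le> 194 / sqrt (real k)"
    proof (cases "kr \<ge> 16")
      case False
      have "tv_dist (indicator_sum_pmf p ({1..n} - {j})) (indicator_sum_pmf q ({1..n} - {j})) \<le> 1"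
        by (rule tv_le1) (use p01' q01' in auto)
      then show ?thesis using small[OF False] by linarith
    next
      case True
      show ?thesis
      proof (cases "n = 1")
        case True
        then have E: "{1..n} - {j} = {}" using j by auto
        have "tv_dist (indicator_sum_pmf p {}) (indicator_sum_pmf q {}) = 0"
          by (subst tv_dist_norm1) (simp_all add: G_def)
        then have "tv_dist (indicator_sum_pmf p ({1..n} - {j})) (indicator_sum_pmf q ({1..n} - {j})) = 0"
          unfolding E .
        then show ?thesis using sqk0 by simp
      next
        case False
        then obtain M where M: "n - 1 = Suc M" using n by (cases "n - 1") auto
        define tj where "tj = inv_into {..<n} e j"
        have tj: "tj < n" "e tj = j" using inv[OF j] unfolding tj_def by auto
        define sk where "sk s = (if s < tj then s else Suc s)" for s
        have skb: "bij_betw sk {..<n - 1} ({..<n} - {tj})"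
          unfolding sk_def by (rule skip_bij[OF tj(1)])
        have sk_lt: "sk s < n" if "s < n - 1" for s using that unfolding sk_def by auto
        have eb: "bij_betw e ({..<n} - {tj}) ({1..n} - {j})"
        proof (rule bij_betw_subset[OF bij])
          show "{..<n} - {tj} \<subseteq> {..<n}" by auto
          have "e ` ({..<n} - {tj}) = e ` {..<n} - e ` {tj}"
            using bij tj by (intro inj_on_image_set_diff) (auto simp: bij_betw_def)
          then show "e ` ({..<n} - {tj}) = {1..n} - {j}" using bij tj by (simp add: bij_betw_def)
        qed
        have "tv_dist (indicator_sum_pmf p ({1..n} - {j})) (indicator_sum_pmf q ({1..n} - {j})) \<le> 97 * (2 / kr)"
        proof (rule tv_from_seq[where e = "e \<circ> sk" and M = M and k = kr])
          show "bij_betw (e \<circ> sk) {..<Suc M} ({1..n} - {j})"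
            using bij_betw_trans[OF skb eb] M by simp
          show "0 \<le> p i \<and> p i \<le> 1" if "i \<in> {1..n} - {j}" for i using p01' that by auto
          show "0 \<le> q i \<and> q i \<le> 1" if "i \<in> {1..n} - {j}" for i using q01' that by auto
          show "16 \<le> kr" by (rule True)
          show "\<bar>p ((e \<circ> sk) t) - q ((e \<circ> sk) t)\<bar> \<le> 1 / kr" if "t < Suc M" for t
          proof -
            have "sk t < n" using that M sk_lt by simp
            then show ?thesis using closeA[of "sk t"] Ae[of "sk t"] qe[of "sk t"] by simp
          qed
          show "0 \<le> 2 / kr" using kr0 by simp
          show "2 / kr \<le> 1 / 2" using True by simp
          show "p ((e \<circ> sk) s) \<le> p ((e \<circ> sk) t)" if "s \<le> t" "t < Suc M" for s t
          proof -
            have "sk s \<le> sk t" using that(1) unfolding sk_def by auto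
            moreover have "sk t < n" using that M sk_lt by simp
            ultimately show ?thesis using monoA by simp
          qed
          show "\<bar>\<Sum>t\<in>{u..<v}. p ((e \<circ> sk) t) - q ((e \<circ> sk) t)\<bar> \<le> 2 / kr" if v: "v \<le> Suc M" for u v
          proof -
            have "(\<Sum>t\<in>{u..<v}. p ((e \<circ> sk) t) - q ((e \<circ> sk) t)) = (\<Sum>t\<in>{u..<v}. (\<lambda>s. A s - bq s) (sk t))"
            proof (intro sum.cong refl)
              fix t assume "t \<in> {u..<v}"
              then have "sk t < n" using v M sk_lt by simp
              then show "p ((e \<circ> sk) t) - q ((e \<circ> sk) t) = (\<lambda>s. A s - bq s) (sk t)"
                using Ae qe by simp
            qed
            also have "\<dots> = (\<Sum>t\<in>{u..<min v tj}. A t - bq t) + (\<Sum>t\<in>{Suc (max u tj)..<Suc v}. A t - bq t)"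
              unfolding sk_def by (rule skip_sum)
            finally have e2: "(\<Sum>t\<in>{u..<v}. p ((e \<circ> sk) t) - q ((e \<circ> sk) t)) =
               (\<Sum>t\<in>{u..<min v tj}. A t - bq t) + (\<Sum>t\<in>{Suc (max u tj)..<Suc v}. A t - bq t)" .
            have "\<bar>(\<Sum>t\<in>{u..<min v tj}. A t - bq t) + (\<Sum>t\<in>{Suc (max u tj)..<Suc v}. A t - bq t)\<bar> \<le> 1 / kr + 1 / kr"
              by (rule order_trans[OF abs_triangle_ineq add_mono[OF intsA intsA]])
            then show ?thesis unfolding e2 by simp
          qed
        qed
        then show ?thesis using big[of 2] by simp
      qed
    qed
    qed
  qed
qed


end
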